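(* Let $G$ be a graph with $n$ vertices and $m\ge1$ edges, and put $X=2m+M_1-\frac{4m^2}{n}$. (i) If $n\le\frac{8m^2}{2m+M_1}$, then $$QE(G)\ \le\ \frac{2m}{n}+\sqrt{(n-1)\Big[X-\Big(\frac{2m}{n}\Big)^2\Big]},$$ with equality if and only if $G\cong K_n$, $G\cong\frac n2K_2$, or $G\cong S(n,r)$ for some $r$. (ii) If $n>\frac{8m^2}{2m+M_1}$, then $$QE(G)\ <\ \sqrt{\frac{X}{n}}+\sqrt{(n-1)\Big(X-\frac{X}{n}\Big)}.$$
   Context: All graphs are finite, simple and undirected. For a graph $G$ with $n$ vertices and $m$ edges, let $q_1\ge\cdots\ge q_n\ge0$ be the eigenvalues of the signless Laplacian $Q(G)=D(G)+A(G)$ ($D(G)$ the diagonal degree matrix, $A(G)$ the adjacency matrix). The signless Laplacian energy is $QE(G)=\sum_{i=1}^n|q_i-\frac{2m}{n}|$. $M_1=\sum_v d(v)^2$ is the first Zagreb index. $\frac n2K_2$ is the disjoint union of $\frac n2$ copies of $K_2$. A strongly regular graph with parameters $(n,r,a,c)$ is an $r$-regular graph on $n$ vertices in which any two adjacent vertices have exactly $a$ common neighbours and any two non-adjacent vertices have exactly $c$ common neighbours; $S(n,r)$ denotes a strongly regular graph with parameters $\big(n,r,\frac{r(r-1)}{n-1},\frac{r(r-1)}{n-1}\big)$. *)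

theory Defs
  imports "Jordan_Normal_Form.Char_Poly" "HOL-Computational_Algebra.Polynomial"
begin

definition simple_graph :: "nat \<Rightarrow> (nat \<Rightarrow> nat \<Rightarrow> bool) \<Rightarrow> bool" where
  "simple_graph n E \<longleftrightarrow> (\<forall>i j. E i j \<longrightarrow> i < n \<and> j < n \<and> i \<noteq> j \<and> E j i)"

definition edges :: "nat \<Rightarrow> (nat \<Rightarrow> nat \<Rightarrow> bool) \<Rightarrow> nat set set" where
  "edges n E = {{i, j} | i j. i < n \<and> j < n \<and> E i j}"

definition num_edges :: "nat \<Rightarrow> (nat \<Rightarrow> nat \<Rightarrow> bool) \<Rightarrow> nat" where
  "num_edges n E = card (edges n E)"

definition degree :: "nat \<Rightarrow> (nat \<Rightarrow> nat \<Rightarrow> bool) \<Rightarrow> nat \<Rightarrow> nat" where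
  "degree n E v = card {u. u < n \<and> E v u}"

definition zagreb1 :: "nat \<Rightarrow> (nat \<Rightarrow> nat \<Rightarrow> bool) \<Rightarrow> nat" where
  "zagreb1 n E = (\<Sum>v<n. (degree n E v)^2)"

definition signless_laplacian :: "nat \<Rightarrow> (nat \<Rightarrow> nat \<Rightarrow> bool) \<Rightarrow> real mat" where
  "signless_laplacian n E = mat n n (\<lambda>(i, j).
      (if i = j then real (degree n E i) else 0) + (if E i j then 1 else 0))"

text \<open>Eigenvalues with multiplicity: the real roots of the characteristic polynomial
  (for the real symmetric matrix Q these are all n eigenvalues).\<close>
definition Q_eigenvalues :: "nat \<Rightarrow> (nat \<Rightarrow> nat \<Rightarrow> bool) \<Rightarrow> real multiset" where
  "Q_eigenvalues n E = proots (char_poly (signless_laplacian n E))"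

definition QE :: "nat \<Rightarrow> (nat \<Rightarrow> nat \<Rightarrow> bool) \<Rightarrow> real" where
  "QE n E = (\<Sum>q\<in>#Q_eigenvalues n E. \<bar>q - 2 * real (num_edges n E) / real n\<bar>)"

definition graph_iso :: "nat \<Rightarrow> (nat \<Rightarrow> nat \<Rightarrow> bool) \<Rightarrow> (nat \<Rightarrow> nat \<Rightarrow> bool) \<Rightarrow> bool" where
  "graph_iso n E E' \<longleftrightarrow> (\<exists>f. bij_betw f {..<n} {..<n} \<and>
      (\<forall>i<n. \<forall>j<n. E i j \<longleftrightarrow> E' (f i) (f j)))"

definition complete_graph :: "nat \<Rightarrow> nat \<Rightarrow> nat \<Rightarrow> bool" where
  "complete_graph n i j \<longleftrightarrow> i < n \<and> j < n \<and> i \<noteq> j"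

text \<open>(n/2) K_2: vertices 2k and 2k+1 joined, for 2k+1 < n (meaningful for n even).\<close>
definition matching_graph :: "nat \<Rightarrow> nat \<Rightarrow> nat \<Rightarrow> bool" where
  "matching_graph n i j \<longleftrightarrow> i < n \<and> j < n \<and> i \<noteq> j \<and> i div 2 = j div 2"

definition common_neighbours :: "nat \<Rightarrow> (nat \<Rightarrow> nat \<Rightarrow> bool) \<Rightarrow> nat \<Rightarrow> nat \<Rightarrow> nat" where
  "common_neighbours n E u v = card {w. w < n \<and> E u w \<and> E v w}"

definition strongly_regular :: "nat \<Rightarrow> (nat \<Rightarrow> nat \<Rightarrow> bool) \<Rightarrow> nat \<Rightarrow> real \<Rightarrow> real \<Rightarrow> bool" where
  "strongly_regular n E r a c \<longleftrightarrow>
     (\<forall>v<n. degree n E v = r) \<and>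
     (\<forall>u<n. \<forall>v<n. u \<noteq> v \<longrightarrow> E u v \<longrightarrow> real (common_neighbours n E u v) = a) \<and>
     (\<forall>u<n. \<forall>v<n. u \<noteq> v \<longrightarrow> \<not> E u v \<longrightarrow> real (common_neighbours n E u v) = c)"

definition is_S :: "nat \<Rightarrow> (nat \<Rightarrow> nat \<Rightarrow> bool) \<Rightarrow> nat \<Rightarrow> bool" where
  "is_S n E r \<longleftrightarrow> strongly_regular n E r
      (real r * (real r - 1) / (real n - 1)) (real r * (real r - 1) / (real n - 1))"

end

theory Submission
  imports Defs
begin


definition symm :: "nat \<Rightarrow> (nat \<Rightarrow> nat \<Rightarrow> real) \<Rightarrow> bool" where
  "symm n A \<longleftrightarrow> (\<forall>i<n. \<forall>j<n. A i j = A j i)"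

lemma real_eigen_exists:
  assumes S: "symm n A" and n: "n > 0"
  shows "\<exists>e x. (\<Sum>k<n. (x k)^2) = 1 \<and> (\<forall>i<n. (\<Sum>k<n. A i k * x k) = e * x i)"
proof -
  define M :: "complex mat" where "M = mat n n (\<lambda>(i,j). complex_of_real (A i j))"
  have M: "M \<in> carrier_mat n n" unfolding M_def by simp
  from char_poly_factorized[OF M] obtain as where
    cp: "char_poly M = (\<Prod>a\<leftarrow>as. [:- a, 1:])" and len: "length as = n" by blast
  from len n obtain l where l: "l \<in> set as" by (cases as) auto
  have "poly (char_poly M) l = 0" unfolding cp using l
    by (simp add: poly_prod_list prod_list_zero_iff)
  hence "eigenvalue M l" using eigenvalue_root_char_poly[OF M] by simp
  then obtain v where ev: "eigenvector M v l" unfolding eigenvalue_def by blast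
  hence v: "v \<in> carrier_vec n" "v \<noteq> 0\<^sub>v n" and Mv: "M *\<^sub>v v = l \<cdot>\<^sub>v v"
    unfolding eigenvector_def using M by auto
  define w where "w k = v $ k" for k
  have eq: "(\<Sum>k<n. complex_of_real (A i k) * w k) = l * w i" if i: "i < n" for i
  proof -
    have "(M *\<^sub>v v) $ i = (l \<cdot>\<^sub>v v) $ i" using Mv by simp
    moreover have "(M *\<^sub>v v) $ i = (\<Sum>k<n. complex_of_real (A i k) * w k)"
      using i M v unfolding M_def w_def
      by (auto simp: mult_mat_vec_def scalar_prod_def lessThan_atLeast0 intro!: sum.cong)
    moreover have "(l \<cdot>\<^sub>v v) $ i = l * w i" using i v unfolding w_def by auto
    ultimately show ?thesis by simp
  qed
  obtain k0 where k0: "k0 < n" "w k0 \<noteq> 0"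
    using v unfolding w_def by (metis eq_vecI index_zero_vec(1) index_zero_vec(2) carrier_vecD)
  define s where "s = (\<Sum>i<n. cnj (w i) * (\<Sum>k<n. complex_of_real (A i k) * w k))"
  have s1: "s = l * (\<Sum>i<n. complex_of_real ((cmod (w i))^2))"
  proof -
    have "s = (\<Sum>i<n. cnj (w i) * (l * w i))" unfolding s_def by (rule sum.cong) (auto simp: eq)
    also have "\<dots> = (\<Sum>i<n. l * (cnj (w i) * w i))" by (simp add: mult.commute mult.left_commute)
    also have "\<dots> = l * (\<Sum>i<n. complex_of_real ((cmod (w i))^2))"
      unfolding sum_distrib_left
      by (rule sum.cong, simp, subst complex_norm_square, simp add: mult.commute)
    finally show ?thesis .
  qed
  have "cnj s = (\<Sum>i<n. w i * (\<Sum>k<n. complex_of_real (A i k) * cnj (w k)))"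
    unfolding s_def by (simp add: cnj_sum)
  also have "\<dots> = (\<Sum>i<n. \<Sum>k<n. complex_of_real (A i k) * w i * cnj (w k))"
    by (simp add: sum_distrib_left mult.commute mult.left_commute)
  also have "\<dots> = (\<Sum>k<n. \<Sum>i<n. complex_of_real (A i k) * w i * cnj (w k))"
    by (rule sum.swap)
  also have "\<dots> = (\<Sum>k<n. \<Sum>i<n. complex_of_real (A k i) * w i * cnj (w k))"
    using S unfolding symm_def by (auto intro!: sum.cong)
  also have "\<dots> = s" unfolding s_def
    by (simp add: sum_distrib_left mult.commute mult.left_commute)
  finally have "cnj s = s" .
  hence "Im (cnj s) = Im s" by simp
  hence Ims: "Im s = 0" by simp
  define N where "N = (\<Sum>i<n. (cmod (w i))^2)"
  have Npos: "N > 0" unfolding N_def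
    by (rule sum_pos2[of _ k0]) (use k0 in auto)
  have "s = l * complex_of_real N" unfolding s1 N_def by simp
  hence "Im l * N = 0" using Ims by simp
  hence Iml: "Im l = 0" using Npos by simp
  define e where "e = Re l"
  have leq: "l = complex_of_real e" using Iml unfolding e_def by (simp add: complex_eq_iff)
  have re: "(\<Sum>k<n. A i k * Re (w k)) = e * Re (w i)"
       and im: "(\<Sum>k<n. A i k * Im (w k)) = e * Im (w i)" if "i < n" for i
  proof -
    from eq[OF that] have "Re (\<Sum>k<n. complex_of_real (A i k) * w k) = Re (l * w i)"
       "Im (\<Sum>k<n. complex_of_real (A i k) * w k) = Im (l * w i)" by auto
    thus "(\<Sum>k<n. A i k * Re (w k)) = e * Re (w i)" "(\<Sum>k<n. A i k * Im (w k)) = e * Im (w i)"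
      unfolding leq by (simp_all add: Re_sum Im_sum)
  qed
  have "\<exists>x. x k0 \<noteq> 0 \<and> (\<forall>i<n. (\<Sum>k<n. A i k * x k) = e * x i)"
  proof (cases "Re (w k0) = 0")
    case True
    hence "Im (w k0) \<noteq> 0" using k0 by (simp add: complex_eq_iff)
    thus ?thesis using im by (intro exI[of _ "\<lambda>k. Im (w k)"]) auto
  next
    case False thus ?thesis using re by (intro exI[of _ "\<lambda>k. Re (w k)"]) auto
  qed
  then obtain x where x0: "x k0 \<noteq> 0" and xe: "\<forall>i<n. (\<Sum>k<n. A i k * x k) = e * x i" by blast
  define c where "c = sqrt (\<Sum>k<n. (x k)^2)"
  have cpos: "(\<Sum>k<n. (x k)^2) > 0" by (rule sum_pos2[of _ k0]) (use k0 x0 in auto)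
  hence c0: "c > 0" unfolding c_def by simp
  define y where "y k = x k / c" for k
  have "(\<Sum>k<n. (y k)^2) = (\<Sum>k<n. (x k)^2) / c^2"
    unfolding y_def by (simp add: power_divide sum_divide_distrib)
  also have "\<dots> = 1" unfolding c_def using cpos by simp
  finally have y1: "(\<Sum>k<n. (y k)^2) = 1" .
  have "\<forall>i<n. (\<Sum>k<n. A i k * y k) = e * y i"
    using xe unfolding y_def by (simp add: sum_divide_distrib[symmetric] times_divide_eq_right)
  with y1 show ?thesis by blast
qed



definition mm :: "nat \<Rightarrow> (nat \<Rightarrow> nat \<Rightarrow> real) \<Rightarrow> (nat \<Rightarrow> nat \<Rightarrow> real) \<Rightarrow> (nat \<Rightarrow> nat \<Rightarrow> real)" where
  "mm n A B = (\<lambda>i j. if i < n \<and> j < n then (\<Sum>k<n. A i k * B k j) else 0)"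

definition idm :: "nat \<Rightarrow> nat \<Rightarrow> nat \<Rightarrow> real" where
  "idm n = (\<lambda>i j. if i < n \<and> j < n \<and> i = j then 1 else 0)"

definition tp :: "(nat \<Rightarrow> nat \<Rightarrow> real) \<Rightarrow> (nat \<Rightarrow> nat \<Rightarrow> real)" where
  "tp A = (\<lambda>i j. A j i)"

definition clean :: "nat \<Rightarrow> (nat \<Rightarrow> nat \<Rightarrow> real) \<Rightarrow> bool" where
  "clean n A \<longleftrightarrow> (\<forall>i j. \<not> (i < n \<and> j < n) \<longrightarrow> A i j = 0)"

definition dg :: "nat \<Rightarrow> (nat \<Rightarrow> real) \<Rightarrow> nat \<Rightarrow> nat \<Rightarrow> real" where
  "dg n d = (\<lambda>i j. if i < n \<and> j < n \<and> i = j then d i else 0)"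

lemma clean_mm[simp]: "clean n (mm n A B)" unfolding clean_def mm_def by auto
lemma clean_Im[simp]: "clean n (idm n)" unfolding clean_def idm_def by auto
lemma clean_dg[simp]: "clean n (dg n d)" unfolding clean_def dg_def by auto
lemma clean_tp[simp]: "clean n (tp A) = clean n A" unfolding clean_def tp_def by auto
lemma tp_tp[simp]: "tp (tp A) = A" unfolding tp_def by auto
lemma tp_idm[simp]: "tp (idm n) = idm n" unfolding tp_def idm_def by (intro ext) auto
lemma tp_dg[simp]: "tp (dg n d) = dg n d" unfolding tp_def dg_def by (intro ext) auto

lemma mm_assoc: "mm n (mm n A B) C = mm n A (mm n B C)"
proof (intro ext)
  fix i j
  show "mm n (mm n A B) C i j = mm n A (mm n B C) i j"
  proof (cases "i < n \<and> j < n")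
    case True
    have "mm n (mm n A B) C i j = (\<Sum>k<n. (\<Sum>l<n. A i l * B l k) * C k j)"
      using True unfolding mm_def by (auto intro!: sum.cong)
    also have "\<dots> = (\<Sum>k<n. \<Sum>l<n. A i l * B l k * C k j)" by (simp add: sum_distrib_right)
    also have "\<dots> = (\<Sum>l<n. \<Sum>k<n. A i l * B l k * C k j)" by (rule sum.swap)
    also have "\<dots> = (\<Sum>l<n. A i l * (\<Sum>k<n. B l k * C k j))" by (simp add: sum_distrib_left mult.assoc)
    also have "\<dots> = mm n A (mm n B C) i j"
      using True unfolding mm_def by (auto intro!: sum.cong)
    finally show ?thesis .
  qed (auto simp: mm_def)
qed

lemma mm_Im_left[simp]: "clean n B \<Longrightarrow> mm n (idm n) B = B"
  unfolding mm_def idm_def clean_def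
  by (intro ext) (auto simp: if_distrib[of "\<lambda>x. x * _"] sum.delta cong: if_cong)

lemma mm_Im_right[simp]: "clean n B \<Longrightarrow> mm n B (idm n) = B"
  unfolding mm_def idm_def clean_def
  by (intro ext) (auto simp: if_distrib[of "\<lambda>x. _ * x"] sum.delta' cong: if_cong)

lemma tp_mm: "tp (mm n A B) = mm n (tp B) (tp A)"
  unfolding tp_def mm_def by (intro ext) (auto simp: mult.commute)

lemma mm_dg_right: assumes "i < n" "j < n" shows "mm n U (dg n d) i j = U i j * d j"
proof -
  have e: "(\<Sum>k<n. U i k * (if k < n \<and> j < n \<and> k = j then d k else 0)) = (\<Sum>k<n. if k = j then U i k * d j else 0)"
    by (rule sum.cong) auto
  have "mm n U (dg n d) i j = (\<Sum>k<n. if k = j then U i k * d j else 0)"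
    using assms e unfolding mm_def dg_def by simp
  also have "\<dots> = U i j * d j" using assms by simp
  finally show ?thesis .
qed

lemma householder:
  assumes x1: "(\<Sum>k<n. (x k)^2) = 1" and n: "n > 0"
  shows "\<exists>H. clean n H \<and> tp H = H \<and> mm n H H = idm n \<and> (\<forall>i<n. H i 0 = x i)"
proof -
  have split: "(\<Sum>k<n. f k) = f 0 + (\<Sum>k\<in>{..<n}-{0}. f k)" for f :: "nat \<Rightarrow> real"
    using n by (simp add: sum.remove)
  have x0le: "(x 0)^2 \<le> 1"
  proof -
    have "(\<Sum>k\<in>{..<n}-{0}. (x k)^2) \<ge> 0" by (rule sum_nonneg) auto
    thus ?thesis using x1 split[of "\<lambda>k. (x k)^2"] by linarith
  qed
  define t where "t = 1 - x 0"
  have t0: "t \<ge> 0"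
  proof (rule ccontr)
    assume "\<not> t \<ge> 0" hence "1 < x 0" unfolding t_def by simp
    hence "1 * 1 < x 0 * x 0" by (intro mult_strict_mono) auto
    thus False using x0le by (simp add: power2_eq_square)
  qed
  show ?thesis
  proof (cases "t = 0")
    case True
    have rest: "(\<Sum>k\<in>{..<n}-{0}. (x k)^2) = 0" using x1 split[of "\<lambda>k. (x k)^2"] True
      unfolding t_def by simp
    have xi: "x i = 0" if "i < n" "i \<noteq> 0" for i
    proof -
      have "(x i)^2 = 0" using rest sum_nonneg_eq_0_iff[of "{..<n}-{0}" "\<lambda>k. (x k)^2"] that by auto
      thus ?thesis by simp
    qed
    have "\<forall>i<n. idm n i 0 = x i"
      using xi True n unfolding idm_def t_def by auto
    thus ?thesis by (intro exI[of _ "idm n"]) auto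
  next
    case False
    hence tp0: "t > 0" using t0 by simp
    define w where "w i = x i - (if i = 0 then 1 else 0)" for i
    define H where "H = (\<lambda>i j. if i < n \<and> j < n then (if i = j then 1 else 0) - w i * w j / t else (0::real))"
    have ww: "(\<Sum>k<n. (w k)^2) = 2 * t"
    proof -
      have "(\<Sum>k<n. (w k)^2) = (\<Sum>k<n. (x k)^2 - 2 * (if k = 0 then x k else 0) + (if k = 0 then 1 else 0))"
        unfolding w_def by (rule sum.cong) (simp, cases "k = 0", simp_all add: power2_eq_square algebra_simps)
      also have "\<dots> = 1 - 2 * x 0 + 1" using n x1
        by (simp add: sum.distrib sum_subtractf sum_distrib_left[symmetric])
      finally show ?thesis unfolding t_def by simp
    qed
    have cleanH: "clean n H" unfolding clean_def H_def by auto
    have tpH: "tp H = H" unfolding tp_def H_def by (intro ext) (auto simp: mult.commute)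
    have HH: "mm n H H = idm n"
    proof (intro ext)
      fix i j
      show "mm n H H i j = idm n i j"
      proof (cases "i < n \<and> j < n")
        case True
        define a where "a p q = w p * w q / t" for p q
        define d where "d p q = (if p = q then 1 else (0::real))" for p q :: nat
        have e1: "(\<Sum>k<n. d i k * d k j) = d i j"
        proof -
          have "(\<Sum>k<n. d i k * d k j) = (\<Sum>k<n. if k = i then d i j else 0)"
            by (rule sum.cong) (auto simp: d_def)
          thus ?thesis using True by simp
        qed
        have e2: "(\<Sum>k<n. d i k * a k j) = a i j"
        proof -
          have "(\<Sum>k<n. d i k * a k j) = (\<Sum>k<n. if k = i then a i j else 0)"
            by (rule sum.cong) (auto simp: d_def)
          thus ?thesis using True by simp
        qed
        have e3: "(\<Sum>k<n. a i k * d k j) = a i j"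
        proof -
          have "(\<Sum>k<n. a i k * d k j) = (\<Sum>k<n. if k = j then a i j else 0)"
            by (rule sum.cong) (auto simp: d_def)
          thus ?thesis using True by simp
        qed
        have e4: "(\<Sum>k<n. a i k * a k j) = w i * w j / t^2 * (2 * t)"
        proof -
          have "(\<Sum>k<n. a i k * a k j) = (\<Sum>k<n. w i * w j / t^2 * (w k)^2)"
            by (rule sum.cong) (auto simp: a_def power2_eq_square)
          thus ?thesis by (simp only: sum_distrib_left[symmetric] ww)
        qed
        have "mm n H H i j = (\<Sum>k<n. H i k * H k j)" using True by (simp add: mm_def)
        also have "\<dots> = (\<Sum>k<n. (d i k - a i k) * (d k j - a k j))"
          using True unfolding H_def a_def d_def by (intro sum.cong) auto
        also have "\<dots> = (\<Sum>k<n. d i k * d k j - d i k * a k j - a i k * d k j + a i k * a k j)"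
          by (rule sum.cong) (auto simp: algebra_simps)
        also have "\<dots> = d i j - a i j - a i j + w i * w j / t^2 * (2 * t)"
          by (simp add: sum.distrib sum_subtractf e1 e2 e3 e4)
        also have "\<dots> = d i j" using tp0 unfolding a_def by (simp add: power2_eq_square field_simps)
        finally show ?thesis using True unfolding idm_def d_def by simp
      qed (auto simp: mm_def idm_def)
    qed
    have "\<forall>i<n. H i 0 = x i"
    proof (intro allI impI)
      fix i assume i: "i < n"
      have "w 0 = - t" unfolding w_def t_def by simp
      thus "H i 0 = x i" using i n tp0 unfolding H_def by (simp add: w_def)
    qed
    with cleanH tpH HH show ?thesis by blast
  qed
qed




lemma mm_zero_dim[simp]: "mm 0 A B = (\<lambda>i j. 0)" unfolding mm_def by auto
lemma idm_zero_dim[simp]: "idm 0 = (\<lambda>i j. 0)" unfolding idm_def by auto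

lemma mm_entry: "i < n \<Longrightarrow> j < n \<Longrightarrow> mm n A B i j = (\<Sum>k<n. A i k * B k j)"
  unfolding mm_def by simp

lemma symm_of_tp: "tp A = A \<Longrightarrow> symm n A"
  unfolding symm_def tp_def by (metis)

theorem spectral:
  assumes "clean n A" "tp A = A"
  shows "\<exists>U \<mu>. clean n U \<and> mm n (tp U) U = idm n \<and> mm n U (tp U) = idm n \<and> mm n A U = mm n U (dg n \<mu>)"
  using assms
proof (induction n arbitrary: A)
  case 0
  show ?case by (intro exI[of _ "\<lambda>i j. 0"]) (auto simp: clean_def)
next
  case (Suc k A)
  define n where "n = Suc k"
  have cA: "clean n A" and tA: "tp A = A" using Suc.prems n_def by auto
  from real_eigen_exists[OF symm_of_tp[OF tA, of n]] obtain e x where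
    x1: "(\<Sum>k<n. (x k)^2) = 1" and xe: "\<forall>i<n. (\<Sum>k<n. A i k * x k) = e * x i"
    unfolding n_def by auto
  from householder[OF x1] obtain H where cH: "clean n H" and tH: "tp H = H" and HH: "mm n H H = idm n"
    and H0: "\<forall>i<n. H i 0 = x i" unfolding n_def by auto
  define A' where "A' = mm n (mm n H A) H"
  have cA': "clean n A'" unfolding A'_def by simp
  have tA': "tp A' = A'" unfolding A'_def tp_mm tH tA mm_assoc ..
  have col0: "A' i 0 = (if i = 0 then e else 0)" if i: "i < n" for i
  proof -
    have n0: "0 < n" unfolding n_def by simp
    have "A' i 0 = (\<Sum>l<n. (\<Sum>m<n. H i m * A m l) * x l)"
      unfolding A'_def using i n0 H0 by (simp add: mm_entry)
    also have "\<dots> = (\<Sum>l<n. \<Sum>m<n. H i m * A m l * x l)"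
      by (simp add: sum_distrib_right)
    also have "\<dots> = (\<Sum>m<n. \<Sum>l<n. H i m * A m l * x l)"
      by (rule sum.swap)
    also have "\<dots> = (\<Sum>m<n. H i m * (\<Sum>l<n. A m l * x l))"
      by (simp add: sum_distrib_left mult.assoc)
    also have "\<dots> = (\<Sum>m<n. e * (H i m * H m 0))"
      using xe H0 by (intro sum.cong) auto
    also have "\<dots> = e * mm n H H i 0" using i n0 by (simp add: mm_entry sum_distrib_left)
    also have "\<dots> = (if i = 0 then e else 0)" using i n0 unfolding HH idm_def by auto
    finally show ?thesis .
  qed
  have row0: "A' 0 j = (if j = 0 then e else 0)" if "j < n" for j
    using col0[OF that] tA' unfolding tp_def by metis
  define B where "B = (\<lambda>i j. if i < k \<and> j < k then A' (Suc i) (Suc j) else 0)"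
  have cB: "clean k B" unfolding clean_def B_def by auto
  have tB: "tp B = B" unfolding B_def tp_def
    using tA' unfolding tp_def by (intro ext) (metis)
  from Suc.IH[OF cB tB] obtain V \<nu> where cV: "clean k V" and V1: "mm k (tp V) V = idm k"
    and V2: "mm k V (tp V) = idm k" and VE: "mm k B V = mm k V (dg k \<nu>)" by blast
  define U' where "U' = (\<lambda>i j. if i < n \<and> j < n then (if i = 0 \<and> j = 0 then 1 else if i = 0 \<or> j = 0 then 0
       else V (i - 1) (j - 1)) else 0)"
  define \<mu> where "\<mu> = (\<lambda>j. if j = 0 then e else \<nu> (j - 1))"
  have cU': "clean n U'" unfolding clean_def U'_def by auto
  have shift: "(\<Sum>l<n. f l) = f 0 + (\<Sum>l<k. f (Suc l))" for f :: "nat \<Rightarrow> real"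
    unfolding n_def by (rule sum.lessThan_Suc_shift)
  have U'0: "U' 0 0 = 1" "\<And>j. U' 0 (Suc j) = 0" "\<And>i. U' (Suc i) 0 = 0"
    "\<And>i j. i < k \<Longrightarrow> j < k \<Longrightarrow> U' (Suc i) (Suc j) = V i j"
    unfolding U'_def n_def by auto
  have O1: "mm n (tp U') U' = idm n"
  proof (intro ext)
    fix i j show "mm n (tp U') U' i j = idm n i j"
    proof (cases "i < n \<and> j < n")
      case True
      hence e: "mm n (tp U') U' i j = U' 0 i * U' 0 j + (\<Sum>l<k. U' (Suc l) i * U' (Suc l) j)"
        by (simp add: mm_entry shift tp_def)
      show ?thesis
      proof (cases i)
        case 0 thus ?thesis using True e U'0 by (cases j) (auto simp: idm_def)
      next
        case (Suc i')
        show ?thesis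
        proof (cases j)
          case 0 thus ?thesis using True e U'0 Suc by (auto simp: idm_def)
        next
          case (Suc j')
          have "i' < k" "j' < k" using True \<open>i = Suc i'\<close> Suc unfolding n_def by auto
          hence "mm n (tp U') U' i j = mm k (tp V) V i' j'"
            using e U'0 \<open>i = Suc i'\<close> Suc by (simp add: mm_entry tp_def)
          thus ?thesis using V1 \<open>i = Suc i'\<close> Suc \<open>i' < k\<close> \<open>j' < k\<close> unfolding idm_def n_def by simp
        qed
      qed
    qed (auto simp: mm_def idm_def)
  qed
  have O2: "mm n U' (tp U') = idm n"
  proof (intro ext)
    fix i j show "mm n U' (tp U') i j = idm n i j"
    proof (cases "i < n \<and> j < n")
      case True
      hence e: "mm n U' (tp U') i j = U' i 0 * U' j 0 + (\<Sum>l<k. U' i (Suc l) * U' j (Suc l))"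
        by (simp add: mm_entry shift tp_def)
      show ?thesis
      proof (cases i)
        case 0 thus ?thesis using True e U'0 by (cases j) (auto simp: idm_def)
      next
        case (Suc i')
        show ?thesis
        proof (cases j)
          case 0 thus ?thesis using True e U'0 Suc by (auto simp: idm_def)
        next
          case (Suc j')
          have "i' < k" "j' < k" using True \<open>i = Suc i'\<close> Suc unfolding n_def by auto
          hence "mm n U' (tp U') i j = mm k V (tp V) i' j'"
            using e U'0 \<open>i = Suc i'\<close> Suc by (simp add: mm_entry tp_def)
          thus ?thesis using V2 \<open>i = Suc i'\<close> Suc \<open>i' < k\<close> \<open>j' < k\<close> unfolding idm_def n_def by simp
        qed
      qed
    qed (auto simp: mm_def idm_def)
  qed
  have EV: "mm n A' U' = mm n U' (dg n \<mu>)"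
  proof (intro ext)
    fix j i show "mm n A' U' j i = mm n U' (dg n \<mu>) j i"
    proof (cases "j < n \<and> i < n")
      case True
      hence r: "mm n U' (dg n \<mu>) j i = U' j i * \<mu> i" by (simp add: mm_dg_right)
      have e: "mm n A' U' j i = A' j 0 * U' 0 i + (\<Sum>l<k. A' j (Suc l) * U' (Suc l) i)"
        using True by (simp add: mm_entry shift)
      show ?thesis
      proof (cases i)
        case 0
        thus ?thesis using True e r U'0 col0 unfolding \<mu>_def by (cases j) auto
      next
        case (Suc i')
        have i': "i' < k" using True Suc unfolding n_def by auto
        have e2: "mm n A' U' j i = (\<Sum>l<k. A' j (Suc l) * V l i')"
        proof -
          have "(\<Sum>x<k. A' j (Suc x) * U' (Suc x) (Suc i')) = (\<Sum>l<k. A' j (Suc l) * V l i')"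
            by (rule sum.cong) (simp_all add: U'0 i')
          thus ?thesis using e U'0 Suc by simp
        qed
        show ?thesis
        proof (cases j)
          case 0
          have "(\<Sum>l<k. A' j (Suc l) * V l i') = 0" using row0 0 unfolding n_def by simp
          thus ?thesis using e2 r 0 Suc U'0 by simp
        next
          case (Suc j')
          have j': "j' < k" using True Suc unfolding n_def by auto
          have "(\<Sum>l<k. A' j (Suc l) * V l i') = mm k B V j' i'"
            using Suc i' j' unfolding B_def by (simp add: mm_entry)
          also have "\<dots> = V j' i' * \<nu> i'" using VE i' j' by (simp add: mm_dg_right)
          finally show ?thesis using e2 r Suc \<open>i = Suc i'\<close> U'0 i' j' unfolding \<mu>_def by simp
        qed
      qed
    qed (auto simp: mm_def)
  qed
  define U where "U = mm n H U'"
  have tU: "tp U = mm n (tp U') H" unfolding U_def tp_mm tH ..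
  have "mm n (tp U) U = mm n (tp U') (mm n (mm n H H) U')" unfolding tU by (simp only: U_def mm_assoc)
  hence "mm n (tp U) U = idm n" using O1 cU' by (simp add: HH)
  moreover have "mm n U (tp U) = mm n H (mm n (mm n U' (tp U')) H)" unfolding tU by (simp only: U_def mm_assoc)
  hence "mm n U (tp U) = idm n" using O2 cH by (simp add: HH)
  moreover have "mm n A U = mm n U (dg n \<mu>)"
  proof -
    have "mm n H (mm n A' H) = mm n (mm n H H) (mm n A (mm n H H))" unfolding A'_def by (simp only: mm_assoc)
    hence AA: "A = mm n H (mm n A' H)" using cA by (simp add: HH)
    have "mm n A U = mm n H (mm n A' (mm n (mm n H H) U'))" unfolding U_def AA by (simp only: mm_assoc)
    also have "\<dots> = mm n H (mm n U' (dg n \<mu>))" using cU' by (simp add: HH EV)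
    also have "\<dots> = mm n U (dg n \<mu>)" unfolding U_def by (simp only: mm_assoc)
    finally show ?thesis .
  qed
  ultimately show ?case unfolding n_def U_def by (intro exI[of _ "mm (Suc k) H U'"] exI[of _ \<mu>]) auto
qed



definition tr :: "nat \<Rightarrow> (nat \<Rightarrow> nat \<Rightarrow> real) \<Rightarrow> real" where
  "tr n M = (\<Sum>j<n. M j j)"

lemma tr_comm: "tr n (mm n A B) = tr n (mm n B A)"
proof -
  have "tr n (mm n A B) = (\<Sum>j<n. \<Sum>k<n. A j k * B k j)" unfolding tr_def by (simp add: mm_entry)
  also have "\<dots> = (\<Sum>k<n. \<Sum>j<n. A j k * B k j)" by (rule sum.swap)
  also have "\<dots> = tr n (mm n B A)" unfolding tr_def by (simp add: mm_entry mult.commute)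
  finally show ?thesis .
qed

lemma tr_dg: "tr n (dg n f) = (\<Sum>i<n. f i)" unfolding tr_def dg_def by simp

lemma mm_dg_dg: "mm n (dg n f) (dg n g) = dg n (\<lambda>i. f i * g i)"
proof (intro ext)
  fix i j show "mm n (dg n f) (dg n g) i j = dg n (\<lambda>i. f i * g i) i j"
  proof (cases "i < n \<and> j < n")
    case True thus ?thesis by (simp add: mm_dg_right) (simp add: dg_def)
  qed (auto simp: mm_def dg_def)
qed

definition S :: "nat \<Rightarrow> (nat \<Rightarrow> nat \<Rightarrow> real) \<Rightarrow> (nat \<Rightarrow> real) \<Rightarrow> nat \<Rightarrow> nat \<Rightarrow> real" where
  "S n U f = mm n (mm n U (dg n f)) (tp U)"

lemma S_entry: assumes "j < n" "k < n" shows "S n U f j k = (\<Sum>i<n. f i * U j i * U k i)"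
proof -
  have "S n U f j k = (\<Sum>i<n. mm n U (dg n f) j i * U k i)" unfolding S_def using assms
    by (simp add: mm_entry tp_def)
  also have "\<dots> = (\<Sum>i<n. f i * U j i * U k i)" using assms
    by (intro sum.cong) (auto simp: mm_dg_right)
  finally show ?thesis .
qed

lemma S_mult: assumes "mm n (tp U) U = idm n"
  shows "mm n (S n U f) (S n U g) = S n U (\<lambda>i. f i * g i)"
proof -
  have "mm n (S n U f) (S n U g) = mm n U (mm n (dg n f) (mm n (mm n (tp U) U) (mm n (dg n g) (tp U))))"
    unfolding S_def by (simp only: mm_assoc)
  also have "\<dots> = mm n U (mm n (mm n (dg n f) (dg n g)) (tp U))" unfolding assms
    by (simp add: mm_assoc)
  also have "\<dots> = S n U (\<lambda>i. f i * g i)" unfolding S_def mm_dg_dg by (simp only: mm_assoc)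
  finally show ?thesis .
qed

lemma S_tr: assumes "mm n (tp U) U = idm n" shows "tr n (S n U f) = (\<Sum>i<n. f i)"
proof -
  have "tr n (S n U f) = tr n (mm n U (mm n (dg n f) (tp U)))" unfolding S_def by (simp only: mm_assoc)
  also have "\<dots> = tr n (mm n (mm n (dg n f) (tp U)) U)" by (rule tr_comm)
  also have "\<dots> = tr n (dg n f)" by (simp add: mm_assoc assms)
  finally show ?thesis by (simp add: tr_dg)
qed

lemma S_sym: "j < n \<Longrightarrow> k < n \<Longrightarrow> S n U f j k = S n U f k j"
  by (simp add: S_entry mult.commute mult.left_commute)

lemma S_sumsq: assumes "mm n (tp U) U = idm n"
  shows "(\<Sum>j<n. \<Sum>k<n. (S n U f j k)^2) = (\<Sum>i<n. (f i)^2)"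
proof -
  have "(\<Sum>j<n. \<Sum>k<n. (S n U f j k)^2) = tr n (mm n (S n U f) (S n U f))"
    unfolding tr_def by (intro sum.cong) (auto simp: mm_entry power2_eq_square intro!: sum.cong dest: S_sym)
  also have "\<dots> = (\<Sum>i<n. (f i)^2)" unfolding S_mult[OF assms] S_tr[OF assms] by (simp add: power2_eq_square)
  finally show ?thesis .
qed

lemma S_of_eig: assumes "clean n A" "mm n U (tp U) = idm n" "mm n A U = mm n U (dg n \<mu>)"
  shows "A = S n U \<mu>"
proof -
  have "A = mm n A (mm n U (tp U))" using assms by simp
  also have "\<dots> = S n U \<mu>" unfolding S_def by (simp add: mm_assoc[symmetric] assms(3))
  finally show ?thesis .
qed

definition tj :: "nat \<Rightarrow> (nat \<Rightarrow> nat \<Rightarrow> real) \<Rightarrow> real mat" where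
  "tj n F = mat n n (\<lambda>(i,j). F i j)"

lemma tj_mm: "tj n (mm n A B) = tj n A * tj n B"
  by (rule eq_matI) (auto simp: tj_def mm_def scalar_prod_def lessThan_atLeast0 intro!: sum.cong)

lemma tj_idm: "tj n (idm n) = 1\<^sub>m n"
  by (rule eq_matI) (auto simp: tj_def idm_def)

lemma tj_carrier[simp]: "tj n A \<in> carrier_mat n n" unfolding tj_def by simp
lemma tj_dim[simp]: "dim_row (tj n A) = n" "dim_col (tj n A) = n" unfolding tj_def by simp_all

lemma proots_linear_prod: "proots (\<Prod>a\<leftarrow>as. [:- a, 1:]) = mset (as :: real list)"
proof (induction as)
  case (Cons a as)
  have "(\<Prod>a\<leftarrow>as. [:- a, 1:]) \<noteq> 0" by (auto simp: prod_list_zero_iff)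
  hence "proots ([:- a, 1:] * (\<Prod>a\<leftarrow>as. [:- a, 1:])) = proots [:- a, 1:] + proots (\<Prod>a\<leftarrow>as. [:- a, 1:])"
    by (intro proots_mult) auto
  also have "\<dots> = {#a#} + mset as" using Cons proots_linear_factor[of "- a"] by simp
  finally show ?case by simp
qed simp

lemma char_poly_spectral:
  assumes U1: "mm n (tp U) U = idm n" and U2: "mm n U (tp U) = idm n"
    and cA: "clean n A" and EV: "mm n A U = mm n U (dg n \<mu>)"
  shows "proots (char_poly (tj n A)) = mset (map \<mu> [0..<n])"
proof -
  have AS: "A = S n U \<mu>" using S_of_eig[OF cA U2 EV] .
  let ?P = "tj n U" and ?Q = "tj n (tp U)" and ?D = "tj n (dg n \<mu>)"
  have "similar_mat_wit (tj n A) ?D ?P ?Q"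
    unfolding similar_mat_wit_def Let_def
    using U1 U2 unfolding AS S_def tj_mm[symmetric] tj_idm[symmetric]
    by (auto simp: tj_mm tj_idm mult_carrier_mat)
  hence "similar_mat (tj n A) ?D" unfolding similar_mat_def by blast
  hence "char_poly (tj n A) = char_poly ?D" by (rule char_poly_similar)
  also have "\<dots> = (\<Prod>a\<leftarrow>diag_mat ?D. [:- a, 1:])"
    by (rule char_poly_upper_triangular[of _ n]) (auto simp: tj_def dg_def upper_triangular_def)
  also have "diag_mat ?D = map \<mu> [0..<n]"
    by (auto simp: diag_mat_def tj_def dg_def intro!: nth_equalityI)
  finally have "char_poly (tj n A) = (\<Prod>a\<leftarrow>map \<mu> [0..<n]. [:- a, 1:])" .
  thus ?thesis by (simp only: proots_linear_prod)
qed



definition qf :: "nat \<Rightarrow> (nat \<Rightarrow> nat \<Rightarrow> bool) \<Rightarrow> nat \<Rightarrow> nat \<Rightarrow> real" where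
  "qf n E = (\<lambda>i j. if i < n \<and> j < n then (if i = j then real (degree n E i) else 0) + (if E i j then 1 else 0) else 0)"

lemma sg: assumes "simple_graph n E" "E i j" shows "i < n" "j < n" "i \<noteq> j" "E j i"
  using assms unfolding simple_graph_def by auto

lemma qf_clean: "clean n (qf n E)" unfolding clean_def qf_def by auto

lemma qf_tp: assumes "simple_graph n E" shows "tp (qf n E) = qf n E"
  unfolding tp_def qf_def by (intro ext) (auto dest: sg[OF assms])

lemma qf_tj: "tj n (qf n E) = signless_laplacian n E"
  by (rule eq_matI) (auto simp: tj_def qf_def signless_laplacian_def)

lemma card_filter_sum: "real (card {u. u < (n::nat) \<and> P u}) = (\<Sum>u<n. if P u then 1 else 0)"
proof -
  have f: "finite {..<n}" by simp
  from sum.inter_filter[OF f, of "\<lambda>_. (1::real)" P]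
  have "(\<Sum>x \<in> {x \<in> {..<n}. P x}. (1::real)) = (\<Sum>x<n. if P x then 1 else 0)" .
  thus ?thesis by simp
qed

lemma deg_sum: "real (degree n E v) = (\<Sum>u<n. if E v u then 1 else 0)"
  unfolding degree_def by (rule card_filter_sum)

lemma common_sum: "real (common_neighbours n E u v) = (\<Sum>w<n. (if E u w then 1 else 0) * (if E v w then 1 else 0))"
  unfolding common_neighbours_def card_filter_sum[of n "\<lambda>w. E u w \<and> E v w"] by (intro sum.cong) auto

lemma handshake: assumes G: "simple_graph n E"
  shows "2 * num_edges n E = (\<Sum>v<n. degree n E v)"
proof -
  define P where "P = {(i,j). i < n \<and> j < n \<and> E i j}"
  define Pl where "Pl = {(i,j). i < n \<and> j < n \<and> E i j \<and> i < j}"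
  define Pg where "Pg = {(i,j). i < n \<and> j < n \<and> E i j \<and> j < i}"
  have PS: "P = (SIGMA i:{..<n}. {j. j < n \<and> E i j})" unfolding P_def by auto
  have cP: "card P = (\<Sum>v<n. degree n E v)" unfolding PS degree_def
    by (subst card_SigmaI) auto
  have fin: "finite Pl" "finite Pg"
  proof -
    have "Pl \<subseteq> {..<n} \<times> {..<n}" "Pg \<subseteq> {..<n} \<times> {..<n}" unfolding Pl_def Pg_def by auto
    thus "finite Pl" "finite Pg" by (auto intro: finite_subset)
  qed
  have Pu: "P = Pl \<union> Pg" "Pl \<inter> Pg = {}" unfolding P_def Pl_def Pg_def
    by (auto dest: sg[OF G] simp: linorder_neq_iff)
  have "card Pg = card Pl"
  proof (rule bij_betw_same_card)
    show "bij_betw prod.swap Pg Pl"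
      unfolding bij_betw_def Pl_def Pg_def by (auto simp: image_def dest: sg[OF G])
  qed
  have "card Pl = card (edges n E)"
  proof (rule bij_betw_same_card)
    show "bij_betw (\<lambda>(i,j). {i,j}) Pl (edges n E)"
    proof (rule bij_betwI')
      fix x y assume "x \<in> Pl" "y \<in> Pl"
      thus "((\<lambda>(i,j). {i,j}) x = (\<lambda>(i,j). {i,j}) y) = (x = y)"
        unfolding Pl_def by (auto simp: doubleton_eq_iff)
    next
      fix x assume "x \<in> Pl" thus "(\<lambda>(i,j). {i,j}) x \<in> edges n E" unfolding Pl_def edges_def by auto
    next
      fix e assume "e \<in> edges n E"
      then obtain i j where e: "e = {i,j}" "i < n" "j < n" "E i j" unfolding edges_def by auto
      show "\<exists>x\<in>Pl. e = (\<lambda>(i,j). {i,j}) x"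
      proof (cases "i < j")
        case True thus ?thesis using e unfolding Pl_def by (intro bexI[of _ "(i,j)"]) auto
      next
        case False
        hence "j < i" using sg(3)[OF G e(4)] by auto
        thus ?thesis using e sg(4)[OF G e(4)] unfolding Pl_def by (intro bexI[of _ "(j,i)"]) auto
      qed
    qed
  qed
  have "card P = card Pl + card Pg" unfolding Pu by (rule card_Un_disjoint) (use fin Pu in auto)
  thus ?thesis using cP \<open>card Pg = card Pl\<close> \<open>card Pl = card (edges n E)\<close> unfolding num_edges_def by simp
qed

lemma qf_rowsum: assumes G: "simple_graph n E" "j < n"
  shows "(\<Sum>k<n. qf n E j k) = 2 * real (degree n E j)"
proof -
  have "(\<Sum>k<n. qf n E j k) = (\<Sum>k<n. (if k = j then real (degree n E j) else 0) + (if E j k then 1 else 0))"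
    using assms(2) unfolding qf_def by (intro sum.cong) auto
  also have "\<dots> = real (degree n E j) + real (degree n E j)"
    using assms(2) by (simp add: sum.distrib deg_sum)
  finally show ?thesis by simp
qed

lemma qf_total: assumes G: "simple_graph n E"
  shows "(\<Sum>j<n. \<Sum>k<n. qf n E j k) = 4 * real (num_edges n E)"
proof -
  have "(\<Sum>j<n. \<Sum>k<n. qf n E j k) = (\<Sum>j<n. 2 * real (degree n E j))"
    using qf_rowsum[OF G] by (intro sum.cong) auto
  also have "\<dots> = 2 * real (\<Sum>j<n. degree n E j)" by (simp add: sum_distrib_left)
  also have "\<dots> = 4 * real (num_edges n E)" unfolding handshake[OF G, symmetric] by simp
  finally show ?thesis .
qed

lemma qf_trace: assumes G: "simple_graph n E"
  shows "tr n (qf n E) = 2 * real (num_edges n E)"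
proof -
  have "tr n (qf n E) = (\<Sum>j<n. real (degree n E j))"
    unfolding tr_def qf_def by (intro sum.cong) (auto dest: sg[OF G])
  also have "\<dots> = real (\<Sum>j<n. degree n E j)" by simp
  finally show ?thesis unfolding handshake[OF G, symmetric] by simp
qed

lemma qf_sumsq: assumes G: "simple_graph n E"
  shows "(\<Sum>j<n. \<Sum>k<n. (qf n E j k)^2) = real (zagreb1 n E) + 2 * real (num_edges n E)"
proof -
  have "(\<Sum>j<n. \<Sum>k<n. (qf n E j k)^2) =
        (\<Sum>j<n. \<Sum>k<n. (if k = j then (real (degree n E j))^2 else 0) + (if E j k then 1 else 0))"
    unfolding qf_def by (intro sum.cong) (auto dest: sg[OF G])
  also have "\<dots> = (\<Sum>j<n. (real (degree n E j))^2 + real (degree n E j))"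
    by (intro sum.cong) (simp_all add: sum.distrib deg_sum)
  also have "\<dots> = real (zagreb1 n E) + real (\<Sum>j<n. degree n E j)"
    unfolding zagreb1_def by (simp add: sum.distrib)
  finally show ?thesis unfolding handshake[OF G, symmetric] by simp
qed

lemma qf_psd: assumes G: "simple_graph n E"
  shows "(\<Sum>j<n. \<Sum>k<n. x j * qf n E j k * x k) \<ge> 0"
proof -
  define e where "e j k = (if E j k then 1 else (0::real))" for j k
  have d: "(\<Sum>j<n. \<Sum>k<n. x j * qf n E j k * x k) =
      (\<Sum>j<n. real (degree n E j) * (x j)^2) + (\<Sum>j<n. \<Sum>k<n. e j k * x j * x k)"
  proof -
    have "(\<Sum>j<n. \<Sum>k<n. x j * qf n E j k * x k) =
        (\<Sum>j<n. \<Sum>k<n. (if k = j then real (degree n E j) * (x j)^2 else 0) + e j k * x j * x k)"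
      unfolding qf_def e_def by (intro sum.cong) (auto simp: algebra_simps power2_eq_square)
    thus ?thesis by (simp add: sum.distrib)
  qed
  have d1: "(\<Sum>j<n. real (degree n E j) * (x j)^2) = (\<Sum>j<n. \<Sum>k<n. e j k * (x j)^2)"
    unfolding deg_sum e_def by (simp add: sum_distrib_right)
  have d2: "(\<Sum>j<n. \<Sum>k<n. e j k * (x j)^2) = (\<Sum>j<n. \<Sum>k<n. e j k * (x k)^2)"
  proof -
    have "(\<Sum>j<n. \<Sum>k<n. e j k * (x j)^2) = (\<Sum>k<n. \<Sum>j<n. e j k * (x j)^2)" by (rule sum.swap)
    also have "\<dots> = (\<Sum>j<n. \<Sum>k<n. e j k * (x k)^2)" 
      unfolding e_def by (intro sum.cong) (auto dest: sg[OF G])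
    finally show ?thesis .
  qed
  have "2 * (\<Sum>j<n. \<Sum>k<n. x j * qf n E j k * x k) = (\<Sum>j<n. \<Sum>k<n. e j k * (x j + x k)^2)"
  proof -
    have "2 * (\<Sum>j<n. \<Sum>k<n. x j * qf n E j k * x k) =
       (\<Sum>j<n. \<Sum>k<n. e j k * (x j)^2) + (\<Sum>j<n. \<Sum>k<n. e j k * (x k)^2) + 2 * (\<Sum>j<n. \<Sum>k<n. e j k * x j * x k)"
      unfolding d d1 using d2 by simp
    also have "\<dots> = (\<Sum>j<n. \<Sum>k<n. e j k * (x j)^2 + e j k * (x k)^2 + 2 * (e j k * x j * x k))"
      by (simp add: sum.distrib sum_distrib_left)
    also have "\<dots> = (\<Sum>j<n. \<Sum>k<n. e j k * (x j + x k)^2)"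
      by (intro sum.cong) (auto simp: algebra_simps power2_eq_square)
    finally show ?thesis .
  qed
  moreover have "(\<Sum>j<n. \<Sum>k<n. e j k * (x j + x k)^2) \<ge> 0"
    by (intro sum_nonneg) (auto simp: e_def)
  ultimately show ?thesis by simp
qed



lemma lagrange_id:
  fixes a :: "nat \<Rightarrow> real" assumes "finite R"
  shows "real (card R) * (\<Sum>i\<in>R. (a i)^2) - (\<Sum>i\<in>R. a i)^2 = (\<Sum>i\<in>R. \<Sum>j\<in>R. (a i - a j)^2) / 2"
proof -
  have "(\<Sum>i\<in>R. \<Sum>j\<in>R. (a i - a j)^2) = (\<Sum>i\<in>R. \<Sum>j\<in>R. (a i)^2 + (a j)^2 - 2 * (a i * a j))"
    by (intro sum.cong) (auto simp: power2_eq_square algebra_simps)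
  also have "\<dots> = (\<Sum>i\<in>R. \<Sum>j\<in>R. (a i)^2) + (\<Sum>i\<in>R. \<Sum>j\<in>R. (a j)^2) - 2 * (\<Sum>i\<in>R. \<Sum>j\<in>R. a i * a j)"
    by (simp add: sum.distrib sum_subtractf sum_distrib_left)
  also have "(\<Sum>i\<in>R. \<Sum>j\<in>R. (a i)^2) = real (card R) * (\<Sum>i\<in>R. (a i)^2)"
    by (simp add: sum_distrib_left mult.commute)
  also have "(\<Sum>i\<in>R. \<Sum>j\<in>R. (a j)^2) = real (card R) * (\<Sum>i\<in>R. (a i)^2)"
    by simp
  also have "(\<Sum>i\<in>R. \<Sum>j\<in>R. a i * a j) = (\<Sum>i\<in>R. a i)^2"
    by (simp add: power2_eq_square sum_product)
  finally show ?thesis by simp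
qed

lemma cs_abs:
  fixes a :: "nat \<Rightarrow> real" assumes "finite R"
  shows "(\<Sum>i\<in>R. \<bar>a i\<bar>) \<le> sqrt (real (card R) * (\<Sum>i\<in>R. (a i)^2))"
    and "(\<Sum>i\<in>R. \<bar>a i\<bar>) = sqrt (real (card R) * (\<Sum>i\<in>R. (a i)^2)) \<Longrightarrow> i \<in> R \<Longrightarrow> j \<in> R \<Longrightarrow> \<bar>a i\<bar> = \<bar>a j\<bar>"
proof -
  let ?b = "\<lambda>i. \<bar>a i\<bar>"
  have L: "real (card R) * (\<Sum>i\<in>R. (?b i)^2) - (\<Sum>i\<in>R. ?b i)^2 = (\<Sum>i\<in>R. \<Sum>j\<in>R. (?b i - ?b j)^2) / 2"
    by (rule lagrange_id[OF assms])
  have nn: "(\<Sum>i\<in>R. \<Sum>j\<in>R. (?b i - ?b j)^2) \<ge> 0" by (intro sum_nonneg) auto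
  have sq: "(\<Sum>i\<in>R. (?b i)^2) = (\<Sum>i\<in>R. (a i)^2)" by simp
  have pos: "(\<Sum>i\<in>R. ?b i) \<ge> 0" by (intro sum_nonneg) auto
  have sq2: "real (card R) * (\<Sum>i\<in>R. (?b i)^2) = real (card R) * (\<Sum>i\<in>R. (a i)^2)" using sq by simp
  have le: "(\<Sum>i\<in>R. ?b i)^2 \<le> real (card R) * (\<Sum>i\<in>R. (a i)^2)" using L nn sq2 by linarith
  show "(\<Sum>i\<in>R. \<bar>a i\<bar>) \<le> sqrt (real (card R) * (\<Sum>i\<in>R. (a i)^2))"
    using real_le_rsqrt[OF le] .
  assume eq: "(\<Sum>i\<in>R. \<bar>a i\<bar>) = sqrt (real (card R) * (\<Sum>i\<in>R. (a i)^2))" and i: "i \<in> R" and j: "j \<in> R"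
  have "(\<Sum>i\<in>R. ?b i)^2 = real (card R) * (\<Sum>i\<in>R. (a i)^2)"
    using eq pos le by (metis real_sqrt_pow2 order_trans zero_le_power2)
  hence z: "(\<Sum>i\<in>R. \<Sum>j\<in>R. (?b i - ?b j)^2) = 0" using L sq2 by simp
  have "(\<Sum>j\<in>R. (?b i - ?b j)^2) = 0"
    using z sum_nonneg_eq_0_iff[OF assms, of "\<lambda>i. \<Sum>j\<in>R. (?b i - ?b j)^2"] i
    by (simp add: sum_nonneg)
  hence "(?b i - ?b j)^2 = 0" using sum_nonneg_eq_0_iff[OF assms, of "\<lambda>j. (?b i - ?b j)^2"] j by simp
  thus "\<bar>a i\<bar> = \<bar>a j\<bar>" by simp
qed

lemma T_mono:
  fixes a b X N :: real
  assumes N: "N \<ge> 1" and a0: "0 \<le> a" and ab: "a \<le> b" and bX: "b^2 \<le> X" and Xa: "X \<le> (N + 1) * a^2"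
  shows "b + sqrt (N * (X - b^2)) \<le> a + sqrt (N * (X - a^2))"
    and "b + sqrt (N * (X - b^2)) = a + sqrt (N * (X - a^2)) \<Longrightarrow> b = a"
proof -
  define Ta where "Ta = sqrt (N * (X - a^2))"
  define Tb where "Tb = sqrt (N * (X - b^2))"
  have a2b2: "a^2 \<le> b^2" using a0 ab by (simp add: power_mono)
  have Xa0: "N * (X - a^2) \<ge> 0" using bX a2b2 N by simp
  have Xb0: "N * (X - b^2) \<ge> 0" using bX N by simp
  have Ta0: "Ta \<ge> 0" and Tb0: "Tb \<ge> 0" unfolding Ta_def Tb_def using Xa0 Xb0 by simp_all
  have Ta2: "Ta^2 = N * (X - a^2)" unfolding Ta_def using Xa0 by simp
  have Tb2: "Tb^2 = N * (X - b^2)" unfolding Tb_def using Xb0 by simp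
  have diff: "(Ta - Tb) * (Ta + Tb) = N * (b - a) * (b + a)"
    using Ta2 Tb2 by (simp add: algebra_simps power2_eq_square)
  have strict: "b + Tb < a + Ta" if lt: "a < b"
  proof -
    have b0: "b > 0" using a0 lt by simp
    have "Tb^2 < (N * b)^2"
    proof -
      have "a^2 < b^2" using a0 lt by (simp add: power_strict_mono)
      moreover have "N * a^2 \<le> N * b^2" using a2b2 N by (intro mult_left_mono) auto
      ultimately have "X - b^2 < N * b^2" using Xa by (simp add: algebra_simps)
      hence "N * (X - b^2) < N * (N * b^2)" using N by simp
      thus ?thesis using Tb2 by (simp add: power2_eq_square algebra_simps)
    qed
    hence Tbl: "Tb < N * b" by (rule power2_less_imp_less) (use N b0 in auto)
    have "Ta^2 \<le> (N * a)^2"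
    proof -
      have "X - a^2 \<le> N * a^2" using Xa by (simp add: algebra_simps)
      hence "N * (X - a^2) \<le> N * (N * a^2)" using N by simp
      thus ?thesis using Ta2 by (simp add: power2_eq_square algebra_simps)
    qed
    hence Tal: "Ta \<le> N * a" by (rule power2_le_imp_le) (use N a0 in auto)
    have s: "Ta + Tb < N * (b + a)" using Tal Tbl by (simp add: algebra_simps)
    show ?thesis
    proof (cases "Ta + Tb = 0")
      case True
      hence "N * (b - a) * (b + a) = 0" using diff by simp
      moreover have "N * (b - a) * (b + a) > 0" using N lt a0 by simp
      ultimately show ?thesis by linarith
    next
      case False
      hence sp: "Ta + Tb > 0" using Ta0 Tb0 by simp
      have "(b - a) * (Ta + Tb) < (b - a) * (N * (b + a))" using s lt by simp
      also have "\<dots> = (Ta - Tb) * (Ta + Tb)" using diff by (simp add: algebra_simps)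
      finally have "b - a < Ta - Tb" using sp by (simp add: mult_less_cancel_right)
      thus ?thesis by simp
    qed
  qed
  show "b + sqrt (N * (X - b^2)) \<le> a + sqrt (N * (X - a^2))"
    using strict ab unfolding Ta_def[symmetric] Tb_def[symmetric] by (cases "a < b") (auto simp: Ta_def Tb_def)
  show "b + sqrt (N * (X - b^2)) = a + sqrt (N * (X - a^2)) \<Longrightarrow> b = a"
    using strict ab unfolding Ta_def[symmetric] Tb_def[symmetric] by (cases "a < b") (auto simp: Ta_def Tb_def)
qed

lemma iso_S:
  assumes iso: "graph_iso n E E'" and S': "is_S n E' r"
  shows "is_S n E r"
proof -
  from iso obtain f where bij: "bij_betw f {..<n} {..<n}" and fe: "\<forall>i<n. \<forall>j<n. E i j \<longleftrightarrow> E' (f i) (f j)"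
    unfolding graph_iso_def by blast
  have inj: "inj_on f {..<n}" using bij by (simp add: bij_betw_def)
  have fr: "f u < n" if "u < n" for u using bij that by (auto simp: bij_betw_def)
  have cardP: "card {u. u < n \<and> P (f u)} = card {w. w < n \<and> P w}" for P
  proof -
    have "{w. w < n \<and> P w} = f ` {u. u < n \<and> P (f u)}"
    proof
      show "{w. w < n \<and> P w} \<subseteq> f ` {u. u < n \<and> P (f u)}"
      proof
        fix w assume wP: "w \<in> {w. w < n \<and> P w}"
        hence "w \<in> f ` {..<n}" using bij by (simp add: bij_betw_def)
        then obtain u where "u < n" "f u = w" by auto
        thus "w \<in> f ` {u. u < n \<and> P (f u)}" using wP by auto
      qed
    qed (auto simp: fr)
    moreover have "inj_on f {u. u < n \<and> P (f u)}" using inj by (rule inj_on_subset) auto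
    ultimately show ?thesis by (simp add: card_image)
  qed
  have deg: "degree n E v = degree n E' (f v)" if "v < n" for v
  proof -
    have "{u. u < n \<and> E v u} = {u. u < n \<and> E' (f v) (f u)}" using fe that by auto
    thus ?thesis unfolding degree_def using cardP[of "E' (f v)"] by simp
  qed
  have com: "common_neighbours n E u v = common_neighbours n E' (f u) (f v)" if "u < n" "v < n" for u v
  proof -
    have "{w. w < n \<and> E u w \<and> E v w} = {w. w < n \<and> E' (f u) (f w) \<and> E' (f v) (f w)}" using fe that by auto
    thus ?thesis unfolding common_neighbours_def using cardP[of "\<lambda>x. E' (f u) x \<and> E' (f v) x"] by simp
  qed
  have neq: "f u \<noteq> f v" if "u < n" "v < n" "u \<noteq> v" for u v
    using inj that by (auto simp: inj_on_def)
  show ?thesis using S' unfolding is_S_def strongly_regular_def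
    using deg com neq fe fr by metis
qed

lemma complete_S: assumes "n \<ge> 2" shows "is_S n (complete_graph n) (n - 1)"
proof -
  have deg: "degree n (complete_graph n) v = n - 1" if "v < n" for v
  proof -
    have "{u. u < n \<and> complete_graph n v u} = {..<n} - {v}" using that by (auto simp: complete_graph_def)
    thus ?thesis unfolding degree_def using that by simp
  qed
  have com: "common_neighbours n (complete_graph n) u v = n - 2" if "u < n" "v < n" "u \<noteq> v" for u v
  proof -
    have "{w. w < n \<and> complete_graph n u w \<and> complete_graph n v w} = {..<n} - {u, v}"
      using that by (auto simp: complete_graph_def)
    moreover have "card ({..<n} - {u, v}) = n - 2" using that by (subst card_Diff_subset) auto
    ultimately show ?thesis unfolding common_neighbours_def by simp
  qed
  have r: "real (n - 2) = real (n - 1) * (real (n - 1) - 1) / (real n - 1)"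
    using assms by (simp add: of_nat_diff field_simps)
  show ?thesis unfolding is_S_def strongly_regular_def
    using deg com r by (auto simp: complete_graph_def)
qed

lemma matching_S: assumes "even n" shows "is_S n (matching_graph n) 1"
proof -
  have deg: "degree n (matching_graph n) v = 1" if "v < n" for v
  proof -
    define p where "p = (if even v then v + 1 else v - 1)"
    have "p < n" using that assms unfolding p_def by (auto elim!: evenE oddE)
    hence "{u. u < n \<and> matching_graph n v u} = {p}"
      using that unfolding p_def matching_graph_def by (auto elim!: evenE oddE)
    thus ?thesis unfolding degree_def by simp
  qed
  have com: "common_neighbours n (matching_graph n) u v = 0" if "u \<noteq> v" for u v
  proof -
    have "{w. w < n \<and> matching_graph n u w \<and> matching_graph n v w} = {}"
      using that unfolding matching_graph_def by auto
    thus ?thesis unfolding common_neighbours_def by simp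
  qed
  show ?thesis unfolding is_S_def strongly_regular_def using deg com by auto
qed



lemma sum_mset_map_upt: "(\<Sum>q\<in>#mset (map \<mu> [0..<n]). g q) = (\<Sum>i<n. g (\<mu> i))"
  by (induction n) (simp_all add: ac_simps)

lemma QE_sum:
  assumes "proots (char_poly (signless_laplacian n E)) = mset (map \<mu> [0..<n])"
  shows "QE n E = (\<Sum>i<n. \<bar>\<mu> i - 2 * real (num_edges n E) / real n\<bar>)"
  unfolding QE_def Q_eigenvalues_def assms by (rule sum_mset_map_upt)

lemma spec_graph:
  assumes G: "simple_graph n E"
  obtains U \<mu> where "mm n (tp U) U = idm n" "mm n U (tp U) = idm n" "qf n E = S n U \<mu>"
    "mm n (qf n E) U = mm n U (dg n \<mu>)"
    "QE n E = (\<Sum>i<n. \<bar>\<mu> i - 2 * real (num_edges n E) / real n\<bar>)"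
proof -
  from spectral[OF qf_clean qf_tp[OF G]] obtain U \<mu> where
    c: "clean n U" and U1: "mm n (tp U) U = idm n" and U2: "mm n U (tp U) = idm n"
    and EV: "mm n (qf n E) U = mm n U (dg n \<mu>)" by blast
  have "qf n E = S n U \<mu>" by (rule S_of_eig[OF qf_clean U2 EV])
  moreover have "QE n E = (\<Sum>i<n. \<bar>\<mu> i - 2 * real (num_edges n E) / real n\<bar>)"
    using char_poly_spectral[OF U1 U2 qf_clean EV] unfolding qf_tj by (rule QE_sum)
  ultimately show ?thesis using that U1 U2 EV by blast
qed

lemma U1e: "mm n (tp U) U = idm n \<Longrightarrow> i < n \<Longrightarrow> j < n \<Longrightarrow> (\<Sum>k<n. U k i * U k j) = (if i = j then 1 else 0)"
  by (drule fun_cong[where x = i], drule fun_cong[where x = j]) (simp add: mm_entry tp_def idm_def)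

lemma U2e: "mm n U (tp U) = idm n \<Longrightarrow> i < n \<Longrightarrow> j < n \<Longrightarrow> (\<Sum>k<n. U i k * U j k) = (if i = j then 1 else 0)"
  by (drule fun_cong[where x = i], drule fun_cong[where x = j]) (simp add: mm_entry tp_def idm_def)

lemma EVe: assumes "mm n A U = mm n U (dg n \<mu>)" "i < n" "j < n"
  shows "(\<Sum>k<n. A j k * U k i) = \<mu> i * U j i"
proof -
  have "mm n A U j i = mm n U (dg n \<mu>) j i" using assms(1) by simp
  also have "\<dots> = U j i * \<mu> i" using assms by (simp add: mm_dg_right)
  finally show ?thesis using assms(2,3) by (simp add: mm_entry mult.commute)
qed

lemma graph_sums:
  assumes G: "simple_graph n E" and U1: "mm n (tp U) U = idm n" and QS: "qf n E = S n U \<mu>"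
  shows "(\<Sum>i<n. \<mu> i) = 2 * real (num_edges n E)"
    and "(\<Sum>i<n. (\<mu> i)^2) = real (zagreb1 n E) + 2 * real (num_edges n E)"
proof -
  show "(\<Sum>i<n. \<mu> i) = 2 * real (num_edges n E)" using qf_trace[OF G] S_tr[OF U1, of \<mu>] QS by simp
  show "(\<Sum>i<n. (\<mu> i)^2) = real (zagreb1 n E) + 2 * real (num_edges n E)"
    using qf_sumsq[OF G] S_sumsq[OF U1, of \<mu>] QS by simp
qed

lemma graph_psd:
  assumes G: "simple_graph n E" and U1: "mm n (tp U) U = idm n"
    and EV: "mm n (qf n E) U = mm n U (dg n \<mu>)" and i: "i < n"
  shows "\<mu> i \<ge> 0"
proof -
  have "(\<Sum>j<n. \<Sum>k<n. U j i * qf n E j k * U k i) = (\<Sum>j<n. U j i * (\<Sum>k<n. qf n E j k * U k i))"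
    by (simp add: sum_distrib_left mult.assoc)
  also have "\<dots> = (\<Sum>j<n. \<mu> i * (U j i * U j i))"
    using EVe[OF EV i] by (intro sum.cong) (auto simp: mult.commute mult.left_commute)
  also have "\<dots> = \<mu> i" using U1e[OF U1 i i] by (simp add: sum_distrib_left[symmetric])
  finally show ?thesis using qf_psd[OF G, of "\<lambda>j. U j i"] by simp
qed

lemma graph_max:
  assumes G: "simple_graph n E" and U1: "mm n (tp U) U = idm n" and U2: "mm n U (tp U) = idm n"
    and QS: "qf n E = S n U \<mu>" and n: "n > 0"
  shows "\<exists>i0<n. (\<forall>i<n. \<mu> i \<le> \<mu> i0) \<and> \<mu> i0 \<ge> 4 * real (num_edges n E) / real n \<and>
      (\<mu> i0 = 4 * real (num_edges n E) / real n \<longrightarrow> (\<forall>j<n. real (degree n E j) = 2 * real (num_edges n E) / real n))"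
proof -
  define c where "c i = (\<Sum>j<n. U j i)" for i
  have Qe: "qf n E j k = (\<Sum>i<n. \<mu> i * U j i * U k i)" if "j < n" "k < n" for j k
    using S_entry[OF that] QS by simp
  have D1: "(\<Sum>j<n. \<Sum>k<n. qf n E j k) = (\<Sum>i<n. \<mu> i * (c i)^2)"
  proof -
    have "(\<Sum>j<n. \<Sum>k<n. qf n E j k) = (\<Sum>j<n. \<Sum>k<n. \<Sum>i<n. \<mu> i * U j i * U k i)"
      using Qe by (intro sum.cong) auto
    also have "\<dots> = (\<Sum>j<n. \<Sum>i<n. \<Sum>k<n. \<mu> i * U j i * U k i)"
      by (rule sum.cong[OF refl], rule sum.swap)
    also have "\<dots> = (\<Sum>i<n. \<Sum>j<n. \<Sum>k<n. \<mu> i * U j i * U k i)" by (rule sum.swap)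
    also have "\<dots> = (\<Sum>i<n. \<mu> i * (c i)^2)"
    proof (rule sum.cong[OF refl])
      fix i show "(\<Sum>j<n. \<Sum>k<n. \<mu> i * U j i * U k i) = \<mu> i * (c i)^2"
      proof -
        have "(c i)^2 = (\<Sum>j<n. \<Sum>k<n. U j i * U k i)"
          unfolding c_def power2_eq_square by (rule sum_product)
        thus ?thesis by (simp add: sum_distrib_left mult.assoc)
      qed
    qed
    finally show ?thesis .
  qed
  have D2: "(\<Sum>i<n. (c i)^2) = real n"
  proof -
    have "(\<Sum>i<n. (c i)^2) = (\<Sum>i<n. \<Sum>j<n. \<Sum>k<n. U j i * U k i)"
      unfolding c_def power2_eq_square sum_product ..
    also have "\<dots> = (\<Sum>j<n. \<Sum>i<n. \<Sum>k<n. U j i * U k i)" by (rule sum.swap)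
    also have "\<dots> = (\<Sum>j<n. \<Sum>k<n. \<Sum>i<n. U j i * U k i)"
      by (rule sum.cong[OF refl], rule sum.swap)
    also have "\<dots> = (\<Sum>j<n. \<Sum>k<n. if j = k then 1 else 0)"
      using U2e[OF U2] by (intro sum.cong) auto
    also have "\<dots> = real n" by simp
    finally show ?thesis .
  qed
  have D3: "(\<Sum>i<n. U j i * c i) = 1" if j: "j < n" for j
  proof -
    have "(\<Sum>i<n. U j i * c i) = (\<Sum>i<n. \<Sum>k<n. U j i * U k i)"
      unfolding c_def by (simp add: sum_distrib_left)
    also have "\<dots> = (\<Sum>k<n. \<Sum>i<n. U j i * U k i)" by (rule sum.swap)
    also have "\<dots> = (\<Sum>k<n. if j = k then 1 else 0)" using U2e[OF U2 j] by (intro sum.cong) auto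
    also have "\<dots> = 1" using j by simp
    finally show ?thesis .
  qed
  have D4: "(\<Sum>k<n. qf n E j k) = (\<Sum>i<n. \<mu> i * U j i * c i)" if j: "j < n" for j
  proof -
    have "(\<Sum>k<n. qf n E j k) = (\<Sum>k<n. \<Sum>i<n. \<mu> i * U j i * U k i)" using Qe j by (intro sum.cong) auto
    also have "\<dots> = (\<Sum>i<n. \<Sum>k<n. \<mu> i * U j i * U k i)" by (rule sum.swap)
    also have "\<dots> = (\<Sum>i<n. \<mu> i * U j i * c i)" unfolding c_def by (simp add: sum_distrib_left)
    finally show ?thesis .
  qed
  define M where "M = Max (\<mu> ` {..<n})"
  have Mmem: "M \<in> \<mu> ` {..<n}" unfolding M_def using n by (intro Max_in) auto
  then obtain i0 where i0: "i0 < n" "\<mu> i0 = M" by auto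
  have Mge: "\<mu> i \<le> M" if "i < n" for i unfolding M_def using that by (intro Max_ge) auto
  define m where "m = real (num_edges n E)"
  have tot: "(\<Sum>i<n. \<mu> i * (c i)^2) = 4 * m" using D1 qf_total[OF G] unfolding m_def by simp
  have gap: "(\<Sum>i<n. (M - \<mu> i) * (c i)^2) = M * real n - 4 * m"
  proof -
    have "(\<Sum>i<n. (M - \<mu> i) * (c i)^2) = M * (\<Sum>i<n. (c i)^2) - (\<Sum>i<n. \<mu> i * (c i)^2)"
      by (simp add: algebra_simps sum_subtractf sum_distrib_left)
    thus ?thesis using tot D2 by simp
  qed
  have gnn: "(\<Sum>i<n. (M - \<mu> i) * (c i)^2) \<ge> 0" using Mge by (intro sum_nonneg) auto
  have np: "real n > 0" using n by simp
  have Mbound: "M \<ge> 4 * m / real n" using gap gnn np by (simp add: field_simps)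
  have eqcase: "\<forall>j<n. real (degree n E j) = 2 * m / real n" if Meq: "M = 4 * m / real n"
  proof (intro allI impI)
    fix j assume j: "j < n"
    have "(\<Sum>i<n. (M - \<mu> i) * (c i)^2) = 0" using gap Meq np by simp
    hence z: "(M - \<mu> i) * (c i)^2 = 0" if "i < n" for i
      using sum_nonneg_eq_0_iff[of "{..<n}" "\<lambda>i. (M - \<mu> i) * (c i)^2"] Mge that by auto
    have "(\<Sum>k<n. qf n E j k) = (\<Sum>i<n. M * (U j i * c i))"
      unfolding D4[OF j]
    proof (intro sum.cong refl)
      fix i assume "i \<in> {..<n}"
      hence "\<mu> i = M \<or> c i = 0" using z by auto
      thus "\<mu> i * U j i * c i = M * (U j i * c i)" by auto
    qed
    also have "\<dots> = M" using D3[OF j] by (simp add: sum_distrib_left[symmetric])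
    finally have "2 * real (degree n E j) = M" using qf_rowsum[OF G j] by simp
    thus "real (degree n E j) = 2 * m / real n" using Meq by simp
  qed
  show ?thesis using i0 Mge Mbound eqcase unfolding m_def by (intro exI[of _ i0]) auto
qed


lemma adj_deg: assumes G: "simple_graph n E" and reg: "\<forall>j<n. degree n E j = r" and k: "k < n"
  shows "(\<Sum>j<n. if E j k then 1 else (0::real)) = real r"
proof -
  have "(\<Sum>j<n. if E j k then 1 else (0::real)) = (\<Sum>j<n. if E k j then 1 else 0)"
    by (intro sum.cong) (auto dest: sg[OF G])
  also have "\<dots> = real r" using deg_sum[of n E k] reg k by simp
  finally show ?thesis .
qed

lemma A2_entry: assumes G: "simple_graph n E" and j: "j < n" and k: "k < n"
  shows "(\<Sum>l<n. (if E j l then 1 else (0::real)) * (if E l k then 1 else 0)) =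
     (if j = k then real (degree n E j) else real (common_neighbours n E j k))"
proof (cases "j = k")
  case True
  have "(\<Sum>l<n. (if E j l then 1 else (0::real)) * (if E l k then 1 else 0)) = (\<Sum>l<n. if E j l then 1 else 0)"
    using True by (intro sum.cong) (auto dest: sg[OF G])
  thus ?thesis using True deg_sum by simp
next
  case False
  have "(\<Sum>l<n. (if E j l then 1 else (0::real)) * (if E l k then 1 else 0)) =
        (\<Sum>l<n. (if E j l then 1 else 0) * (if E k l then 1 else 0))"
    by (intro sum.cong) (auto dest: sg[OF G])
  thus ?thesis using False common_sum by simp
qed

lemma is_S_values:
  assumes G: "simple_graph n E" and U1: "mm n (tp U) U = idm n"
    and EV: "mm n (qf n E) U = mm n U (dg n \<mu>)" and S: "is_S n E r" and n: "n \<ge> 2" and i: "i < n"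
  shows "(\<mu> i - real r)^2 = (real r)^2 \<or> (\<mu> i - real r)^2 = real r - real r * (real r - 1) / (real n - 1)"
proof -
  define a where "a = real r * (real r - 1) / (real n - 1)"
  define e where "e j k = (if E j k then 1 else (0::real))" for j k
  have reg: "\<forall>j<n. degree n E j = r" using S unfolding is_S_def strongly_regular_def by auto
  have com: "real (common_neighbours n E j k) = a" if "j < n" "k < n" "j \<noteq> k" for j k
    using S that unfolding is_S_def strongly_regular_def a_def by (cases "E j k") auto
  have A2: "(\<Sum>l<n. e j l * e l k) = (if j = k then real r else a)" if "j < n" "k < n" for j k
    using A2_entry[OF G that] reg com that unfolding e_def by auto
  have Ae: "(\<Sum>k<n. e j k * U k i) = (\<mu> i - real r) * U j i" if j: "j < n" for j
  proof -
    have "(\<Sum>k<n. qf n E j k * U k i) = (\<Sum>k<n. (if k = j then real r * U k i else 0) + e j k * U k i)"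
      using j reg unfolding qf_def e_def by (intro sum.cong) (auto simp: algebra_simps)
    also have "\<dots> = real r * U j i + (\<Sum>k<n. e j k * U k i)" using j by (simp add: sum.distrib)
    finally show ?thesis using EVe[OF EV i j] by (simp add: algebra_simps)
  qed
  define \<sigma> where "\<sigma> = (\<Sum>k<n. U k i)"
  have sig: "(\<mu> i - 2 * real r) * \<sigma> = 0"
  proof -
    have "(\<Sum>j<n. \<Sum>k<n. e j k * U k i) = (\<Sum>j<n. (\<mu> i - real r) * U j i)" using Ae by simp
    also have "\<dots> = (\<mu> i - real r) * \<sigma>" unfolding \<sigma>_def by (simp add: sum_distrib_left)
    finally have 1: "(\<Sum>j<n. \<Sum>k<n. e j k * U k i) = (\<mu> i - real r) * \<sigma>" .
    have "(\<Sum>j<n. \<Sum>k<n. e j k * U k i) = (\<Sum>k<n. \<Sum>j<n. e j k * U k i)" by (rule sum.swap)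
    also have "\<dots> = (\<Sum>k<n. real r * U k i)"
      using adj_deg[OF G reg] unfolding e_def by (intro sum.cong) (auto simp: sum_distrib_right[symmetric])
    also have "\<dots> = real r * \<sigma>" unfolding \<sigma>_def by (simp add: sum_distrib_left)
    finally have 2: "(\<Sum>j<n. \<Sum>k<n. e j k * U k i) = real r * \<sigma>" .
    have "(\<mu> i - 2 * real r) * \<sigma> = (\<mu> i - real r) * \<sigma> - real r * \<sigma>" by (simp add: algebra_simps)
    thus ?thesis using 1 2 by linarith
  qed
  have sq: "(\<mu> i - real r)^2 * U j i = (real r - a) * U j i + a * \<sigma>" if j: "j < n" for j
  proof -
    have "(\<Sum>l<n. e j l * (\<Sum>k<n. e l k * U k i)) = (\<Sum>l<n. e j l * ((\<mu> i - real r) * U l i))"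
      using Ae by (intro sum.cong) auto
    also have "\<dots> = (\<mu> i - real r) * (\<Sum>l<n. e j l * U l i)" by (simp add: sum_distrib_left algebra_simps)
    also have "\<dots> = (\<mu> i - real r)^2 * U j i" using Ae[OF j] by (simp add: power2_eq_square)
    finally have 1: "(\<Sum>l<n. e j l * (\<Sum>k<n. e l k * U k i)) = (\<mu> i - real r)^2 * U j i" .
    have "(\<Sum>l<n. e j l * (\<Sum>k<n. e l k * U k i)) = (\<Sum>l<n. \<Sum>k<n. e j l * e l k * U k i)"
      by (simp add: sum_distrib_left mult.assoc)
    also have "\<dots> = (\<Sum>k<n. \<Sum>l<n. e j l * e l k * U k i)" by (rule sum.swap)
    also have "\<dots> = (\<Sum>k<n. (if j = k then real r else a) * U k i)"
      using A2[OF j] by (intro sum.cong) (auto simp: sum_distrib_right[symmetric])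
    also have "\<dots> = (\<Sum>k<n. (if j = k then (real r - a) * U k i else 0) + a * U k i)"
      by (intro sum.cong) (auto simp: algebra_simps)
    also have "\<dots> = (real r - a) * U j i + a * \<sigma>" using j unfolding \<sigma>_def by (simp add: sum.distrib sum_distrib_left)
    finally show ?thesis using 1 by simp
  qed
  show ?thesis
  proof (cases "\<sigma> = 0")
    case True
    have "(\<Sum>k<n. U k i * U k i) = 1" using U1e[OF U1 i i] by simp
    then obtain j where j: "j < n" "U j i \<noteq> 0" by (metis (no_types, lifting) mult_zero_left sum.neutral zero_neq_one lessThan_iff)
    from sq[OF j(1)] True j(2) have "(\<mu> i - real r)^2 = real r - a" by simp
    thus ?thesis unfolding a_def by simp
  next
    case False
    hence "\<mu> i = 2 * real r" using sig by simp
    thus ?thesis by (simp add: power2_eq_square)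
  qed
qed


lemma regular_to_S:
  assumes G: "simple_graph n E" and U1: "mm n (tp U) U = idm n" and U2: "mm n U (tp U) = idm n"
    and QS: "qf n E = S n U \<mu>" and n: "n \<ge> 2" and reg: "\<forall>j<n. degree n E j = r"
    and i0: "i0 < n" "\<mu> i0 = 2 * real r" and oth: "\<forall>i<n. i \<noteq> i0 \<longrightarrow> \<bar>\<mu> i - real r\<bar> = s"
  shows "is_S n E r"
proof -
  define e where "e j k = (if E j k then 1 else (0::real))" for j k
  define Af where "Af = (\<lambda>j k. if j < n \<and> k < n then e j k else 0)"
  have Ue: "(\<Sum>i<n. U j i * U k i) = (if j = k then 1 else 0)" if "j < n" "k < n" for j k
    using U2e[OF U2 that] .
  have qfe: "qf n E j k = (if j = k then real r else 0) + e j k" if "j < n" "k < n" for j k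
    using that reg unfolding qf_def e_def by auto
  have AfS: "Af = S n U (\<lambda>i. \<mu> i - real r)"
  proof (intro ext)
    fix j k show "Af j k = S n U (\<lambda>i. \<mu> i - real r) j k"
    proof (cases "j < n \<and> k < n")
      case True
      have "S n U (\<lambda>i. \<mu> i - real r) j k = (\<Sum>i<n. (\<mu> i - real r) * U j i * U k i)"
        using True by (simp add: S_entry)
      also have "\<dots> = (\<Sum>i<n. \<mu> i * U j i * U k i - real r * (U j i * U k i))"
        by (rule sum.cong) (auto simp: algebra_simps)
      also have "\<dots> = (\<Sum>i<n. \<mu> i * U j i * U k i) - real r * (\<Sum>i<n. U j i * U k i)"
        by (simp add: sum_subtractf sum_distrib_left)
      also have "\<dots> = qf n E j k - real r * (if j = k then 1 else 0)"
        using True S_entry[of j n k U \<mu>] QS Ue by simp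
      also have "\<dots> = Af j k" using True qfe unfolding Af_def by simp
      finally show ?thesis by simp
    next
      case False
      hence "Af j k = 0" unfolding Af_def by auto
      moreover have "S n U (\<lambda>i. \<mu> i - real r) j k = 0"
        using False clean_mm[of n "mm n U (dg n (\<lambda>i. \<mu> i - real r))" "tp U"] unfolding clean_def S_def by blast
      ultimately show ?thesis by simp
    qed
  qed
  define A2 where "A2 = mm n Af Af"
  have A2S: "A2 = S n U (\<lambda>i. (\<mu> i - real r) * (\<mu> i - real r))" unfolding A2_def AfS by (rule S_mult[OF U1])
  have A2e: "A2 j k = (if j = k then real r else real (common_neighbours n E j k))" if "j < n" "k < n" for j k
  proof -
    have "A2 j k = (\<Sum>l<n. e j l * e l k)" unfolding A2_def using that by (simp add: mm_entry Af_def)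
    thus ?thesis using A2_entry[OF G that] reg that unfolding e_def by auto
  qed
  have A2row: "(\<Sum>k<n. A2 j k) = real r * real r" if j: "j < n" for j
  proof -
    have "(\<Sum>k<n. A2 j k) = (\<Sum>k<n. \<Sum>l<n. e j l * e l k)" unfolding A2_def using j
      by (intro sum.cong) (auto simp: mm_entry Af_def)
    also have "\<dots> = (\<Sum>l<n. \<Sum>k<n. e j l * e l k)" by (rule sum.swap)
    also have "\<dots> = (\<Sum>l<n. e j l * (\<Sum>k<n. e l k))" by (simp add: sum_distrib_left)
    also have "\<dots> = (\<Sum>l<n. e j l * real r)" using reg deg_sum unfolding e_def by (intro sum.cong) auto
    also have "\<dots> = real r * real r" using reg j deg_sum[of n E j] unfolding e_def by (simp add: sum_distrib_right[symmetric] mult.commute)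
    finally show ?thesis .
  qed
  define f where "f i = (\<mu> i - real r) * (\<mu> i - real r) - s^2" for i
  define c where "c = (real r)^2 - s^2"
  define M where "M = S n U f"
  have Me: "M j k = A2 j k - s^2 * (if j = k then 1 else 0)" if "j < n" "k < n" for j k
  proof -
    have "M j k = (\<Sum>i<n. f i * U j i * U k i)" unfolding M_def using that by (simp add: S_entry)
    also have "\<dots> = (\<Sum>i<n. (\<mu> i - real r) * (\<mu> i - real r) * U j i * U k i - s^2 * (U j i * U k i))"
      by (rule sum.cong) (auto simp: f_def algebra_simps)
    also have "\<dots> = (\<Sum>i<n. (\<mu> i - real r) * (\<mu> i - real r) * U j i * U k i) - s^2 * (\<Sum>i<n. U j i * U k i)"
      by (simp add: sum_subtractf sum_distrib_left)
    finally have "M j k = (\<Sum>i<n. (\<mu> i - real r) * (\<mu> i - real r) * U j i * U k i) - s^2 * (\<Sum>i<n. U j i * U k i)" .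
    thus ?thesis using Ue[OF that] S_entry[OF that] A2S by simp
  qed
  have f0: "f i = 0" if "i < n" "i \<noteq> i0" for i
  proof -
    have "(\<mu> i - real r) * (\<mu> i - real r) = \<bar>\<mu> i - real r\<bar>^2" by (simp add: power2_eq_square)
    thus ?thesis unfolding f_def using oth that by simp
  qed
  have fi0: "f i0 = c" unfolding f_def c_def using i0 by (simp add: power2_eq_square)
  have sumf: "(\<Sum>i<n. (f i)^2) = c^2"
  proof -
    have "(\<Sum>i<n. (f i)^2) = (f i0)^2 + (\<Sum>i\<in>{..<n}-{i0}. (f i)^2)" using i0 by (simp add: sum.remove)
    also have "(\<Sum>i\<in>{..<n}-{i0}. (f i)^2) = 0" using f0 by (intro sum.neutral) auto
    finally show ?thesis using fi0 by simp
  qed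
  have sumM2: "(\<Sum>j<n. \<Sum>k<n. (M j k)^2) = c^2" unfolding M_def S_sumsq[OF U1] sumf ..
  have sumM: "(\<Sum>j<n. \<Sum>k<n. M j k) = real n * c"
  proof -
    have "(\<Sum>j<n. \<Sum>k<n. M j k) = (\<Sum>j<n. (\<Sum>k<n. A2 j k) - s^2)"
    proof (intro sum.cong refl)
      fix j assume j: "j \<in> {..<n}"
      have "(\<Sum>k<n. M j k) = (\<Sum>k<n. A2 j k - (if k = j then s^2 else 0))" using Me j by (intro sum.cong) auto
      thus "(\<Sum>k<n. M j k) = (\<Sum>k<n. A2 j k) - s^2" using j by (simp add: sum_subtractf)
    qed
    also have "\<dots> = real n * c" using A2row unfolding c_def by (simp add: power2_eq_square algebra_simps)
    finally show ?thesis .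
  qed
  have np: "real n > 0" using n by simp
  define t where "t = c / real n"
  have zero: "(\<Sum>j<n. \<Sum>k<n. (M j k - t)^2) = 0"
  proof -
    have "(\<Sum>j<n. \<Sum>k<n. (M j k - t)^2) = (\<Sum>j<n. \<Sum>k<n. (M j k)^2 - 2 * t * M j k + t^2)"
      by (intro sum.cong) (auto simp: power2_eq_square algebra_simps)
    also have "\<dots> = (\<Sum>j<n. \<Sum>k<n. (M j k)^2) - 2 * t * (\<Sum>j<n. \<Sum>k<n. M j k) + real n * real n * t^2"
      by (simp add: sum.distrib sum_subtractf sum_distrib_left)
    also have "\<dots> = 0" unfolding sumM2 sumM t_def using np by (simp add: power2_eq_square field_simps)
    finally show ?thesis .
  qed
  have Mt: "M j k = t" if "j < n" "k < n" for j k
  proof -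
    have "(\<Sum>k<n. (M j k - t)^2) = 0"
      using zero sum_nonneg_eq_0_iff[of "{..<n}" "\<lambda>j. \<Sum>k<n. (M j k - t)^2"] that by (simp add: sum_nonneg)
    hence "(M j k - t)^2 = 0" using sum_nonneg_eq_0_iff[of "{..<n}" "\<lambda>k. (M j k - t)^2"] that by simp
    thus ?thesis by simp
  qed
  have diag: "real r - s^2 = t" using Mt[OF i0(1) i0(1)] Me[OF i0(1) i0(1)] A2e[OF i0(1) i0(1)] by simp
  have teq: "t = real r * (real r - 1) / (real n - 1)"
  proof -
    have "c = t * real n" unfolding t_def using np by simp
    hence "t * real n = (real r)^2 - real r + t" using diag unfolding c_def by simp
    hence "t * (real n - 1) = real r * (real r - 1)" by (simp add: algebra_simps power2_eq_square)
    moreover have "real n - 1 > 0" using n by simp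
    ultimately show ?thesis by (simp add: field_simps)
  qed
  have com: "real (common_neighbours n E u v) = t" if "u < n" "v < n" "u \<noteq> v" for u v
    using Mt[OF that(1,2)] Me[OF that(1,2)] A2e[OF that(1,2)] that(3) by simp
  show ?thesis unfolding is_S_def strongly_regular_def using reg com teq by auto
qed



lemma deg_le: assumes G: "simple_graph n E" and v: "v < n" shows "degree n E v \<le> n - 1"
proof -
  have "{u. u < n \<and> E v u} \<subseteq> {..<n} - {v}" by (auto dest: sg[OF G])
  hence "card {u. u < n \<and> E v u} \<le> card ({..<n} - {v})" by (intro card_mono) auto
  thus ?thesis unfolding degree_def using v by simp
qed

lemma is_S_eq:
  assumes G: "simple_graph n E" and n: "n \<ge> 2" and U1: "mm n (tp U) U = idm n"
    and EV: "mm n (qf n E) U = mm n U (dg n \<mu>)"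
    and QEe: "QE n E = (\<Sum>i<n. \<bar>\<mu> i - 2 * real (num_edges n E) / real n\<bar>)"
    and S1: "(\<Sum>i<n. \<mu> i) = 2 * real (num_edges n E)"
    and S2: "(\<Sum>i<n. (\<mu> i)^2) = real (zagreb1 n E) + 2 * real (num_edges n E)"
    and S: "is_S n E r"
  shows "QE n E = 2 * real (num_edges n E) / real n + sqrt ((real n - 1) *
     ((2 * real (num_edges n E) + real (zagreb1 n E) - 4 * real (num_edges n E)^2 / real n)
      - (2 * real (num_edges n E) / real n)^2))"
proof -
  have reg: "\<forall>j<n. degree n E j = r" using S unfolding is_S_def strongly_regular_def by auto
  have np: "real n > 0" using n by simp
  have hs: "2 * real (num_edges n E) = real n * real r"
    using handshake[OF G] reg by (simp add: of_nat_mult[symmetric] del: of_nat_mult)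
  have dr: "2 * real (num_edges n E) / real n = real r" using hs np by (simp add: field_simps)
  have z: "real (zagreb1 n E) = real n * (real r)^2" unfolding zagreb1_def using reg by simp
  have Xe: "2 * real (num_edges n E) + real (zagreb1 n E) - 4 * real (num_edges n E)^2 / real n = real n * real r"
  proof -
    have "4 * real (num_edges n E)^2 / real n = (2 * real (num_edges n E))^2 / real n" by (simp add: power2_eq_square)
    also have "\<dots> = real n * (real r)^2" unfolding hs using np by (simp add: power2_eq_square field_simps)
    finally show ?thesis unfolding z hs by simp
  qed
  have rle: "real r \<le> real n - 1" using deg_le[OF G, of 0] reg n by (simp add: of_nat_diff)
  define a where "a = real r * (real r - 1) / (real n - 1)"
  define s2 where "s2 = real r - a"
  have n1: "real n - 1 > 0" using n by simp
  have s2e: "(real n - 1) * s2 = real n * real r - (real r)^2"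
    unfolding s2_def a_def using n1 by (simp add: field_simps power2_eq_square)
  have s2nn: "s2 \<ge> 0"
  proof -
    have "real n * real r - (real r)^2 = real r * (real n - real r)" by (simp add: algebra_simps power2_eq_square)
    moreover have "real r * (real n - real r) \<ge> 0" using rle by simp
    ultimately have "(real n - 1) * s2 \<ge> 0" using s2e by simp
    thus ?thesis using n1 by (simp add: zero_le_mult_iff)
  qed
  define s where "s = sqrt s2"
  have s0: "s \<ge> 0" and ss: "s^2 = s2" unfolding s_def using s2nn by simp_all
  define y where "y i = \<mu> i - real r" for i
  have vals: "(y i)^2 = (real r)^2 \<or> (y i)^2 = s2" if "i < n" for i
    using is_S_values[OF G U1 EV S n that] unfolding y_def s2_def a_def by simp
  have Sy2: "(\<Sum>i<n. (y i)^2) = real n * real r"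
  proof -
    have "(\<Sum>i<n. (y i)^2) = (\<Sum>i<n. (\<mu> i)^2 - 2 * real r * \<mu> i + (real r)^2)"
      unfolding y_def by (intro sum.cong) (auto simp: power2_eq_square algebra_simps)
    also have "\<dots> = (\<Sum>i<n. (\<mu> i)^2) - 2 * real r * (\<Sum>i<n. \<mu> i) + real n * (real r)^2"
      by (simp add: sum.distrib sum_subtractf sum_distrib_left)
    also have "\<dots> = real n * real r" unfolding S1 S2 hs z by (simp add: power2_eq_square algebra_simps)
    finally show ?thesis .
  qed
  define K where "K = {i \<in> {..<n}. (y i)^2 = (real r)^2}"
  have Kfin: "finite K" unfolding K_def by simp
  have Ksub: "K \<subseteq> {..<n}" unfolding K_def by auto
  have cK: "card K \<le> n" using card_mono[OF _ Ksub] by simp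
  have cKc: "card ({..<n} - K) = n - card K" using Ksub by (simp add: card_Diff_subset Kfin)
  have notK: "(y i)^2 = s2" if "i \<in> {..<n} - K" for i using vals that unfolding K_def by auto
  have split: "(\<Sum>i<n. g i) = (\<Sum>i\<in>K. g i) + (\<Sum>i\<in>{..<n} - K. g i)" for g :: "nat \<Rightarrow> real"
    using Ksub by (metis finite_lessThan sum.subset_diff add.commute)
  define k where "k = real (card K)"
  have k_le: "real (n - card K) = real n - k" unfolding k_def using cK by (simp add: of_nat_diff)
  have eq1: "k * (real r)^2 + (real n - k) * s2 = real n * real r"
  proof -
    have "(\<Sum>i\<in>K. (y i)^2) = k * (real r)^2" unfolding k_def K_def by simp
    moreover have "(\<Sum>i\<in>{..<n} - K. (y i)^2) = (real n - k) * s2"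
      using notK cKc k_le by simp
    ultimately show ?thesis using Sy2 split[of "\<lambda>i. (y i)^2"] by simp
  qed
  have QEk: "QE n E = k * real r + (real n - k) * s"
  proof -
    have "QE n E = (\<Sum>i<n. \<bar>y i\<bar>)" unfolding QEe dr y_def ..
    also have "\<dots> = (\<Sum>i\<in>K. \<bar>y i\<bar>) + (\<Sum>i\<in>{..<n} - K. \<bar>y i\<bar>)" by (rule split)
    also have "(\<Sum>i\<in>K. \<bar>y i\<bar>) = k * real r"
    proof -
      have "(\<Sum>i\<in>K. \<bar>y i\<bar>) = (\<Sum>i\<in>K. real r)"
      proof (intro sum.cong refl)
        fix i assume "i \<in> K"
        hence "\<bar>y i\<bar>^2 = (real r)^2" unfolding K_def by simp
        thus "\<bar>y i\<bar> = real r" using power2_eq_iff_nonneg[of "\<bar>y i\<bar>" "real r"] by simp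
      qed
      thus ?thesis unfolding k_def by simp
    qed
    also have "(\<Sum>i\<in>{..<n} - K. \<bar>y i\<bar>) = (real n - k) * s"
    proof -
      have "(\<Sum>i\<in>{..<n} - K. \<bar>y i\<bar>) = (\<Sum>i\<in>{..<n} - K. s)"
      proof (intro sum.cong refl)
        fix i assume "i \<in> {..<n} - K"
        hence "\<bar>y i\<bar>^2 = s^2" using notK ss by simp
        thus "\<bar>y i\<bar> = s" using s0 power2_eq_iff_nonneg[of "\<bar>y i\<bar>" s] by simp
      qed
      thus ?thesis using cKc k_le by simp
    qed
    finally show ?thesis .
  qed
  have bound: "real r + sqrt ((real n - 1) * (real n * real r - (real r)^2)) = real r + (real n - 1) * s"
  proof -
    have "((real n - 1) * s)^2 = (real n - 1) * ((real n - 1) * s^2)"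
      by (simp add: power2_eq_square algebra_simps)
    also have "\<dots> = (real n - 1) * (real n * real r - (real r)^2)" using s2e ss by simp
    finally have "(real n - 1) * (real n * real r - (real r)^2) = ((real n - 1) * s)^2" by simp
    thus ?thesis using n1 s0 by simp
  qed
  have key: "(k - 1) * ((real r)^2 - s2) = 0" using eq1 s2e by (simp add: algebra_simps power2_eq_square)
  have "QE n E = real r + (real n - 1) * s"
  proof (cases "k = 1")
    case True thus ?thesis using QEk by simp
  next
    case False
    hence "(real r)^2 = s^2" using key ss by simp
    hence "s = real r" using s0 power2_eq_iff_nonneg[of s "real r"] by simp
    thus ?thesis using QEk by (simp add: algebra_simps)
  qed
  thus ?thesis unfolding Xe dr using bound by simp
qed

theorem mainTheorem13:
  fixes n :: nat and E :: "nat \<Rightarrow> nat \<Rightarrow> bool"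
  assumes G: "simple_graph n E"
    and m1: "num_edges n E \<ge> 1"
  defines "m \<equiv> real (num_edges n E)"
    and "M1 \<equiv> real (zagreb1 n E)"
    and "X \<equiv> 2 * real (num_edges n E) + real (zagreb1 n E)
               - 4 * real (num_edges n E)^2 / real n"
  shows "(real n \<le> 8 * m^2 / (2 * m + M1) \<longrightarrow>
            QE n E \<le> 2 * m / real n + sqrt ((real n - 1) * (X - (2 * m / real n)^2)) \<and>
            (QE n E = 2 * m / real n + sqrt ((real n - 1) * (X - (2 * m / real n)^2)) \<longleftrightarrow>
               graph_iso n E (complete_graph n) \<or>
               (even n \<and> graph_iso n E (matching_graph n)) \<or>
               (\<exists>r. is_S n E r)))
       \<and> (real n > 8 * m^2 / (2 * m + M1) \<longrightarrow>
            QE n E < sqrt (X / real n) + sqrt ((real n - 1) * (X - X / real n)))"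
proof -
  have n2: "n \<ge> 2"
  proof -
    have "edges n E \<noteq> {}" using m1 unfolding num_edges_def by (metis card.empty not_one_le_zero)
    then obtain i j where ij: "i < n" "j < n" "E i j" unfolding edges_def by auto
    hence "i \<noteq> j" using sg(3)[OF G] by auto
    thus ?thesis using ij by linarith
  qed
  obtain U \<mu> where U1: "mm n (tp U) U = idm n" and U2: "mm n U (tp U) = idm n" and QS: "qf n E = S n U \<mu>"
    and EV: "mm n (qf n E) U = mm n U (dg n \<mu>)"
    and QEe: "QE n E = (\<Sum>i<n. \<bar>\<mu> i - 2 * real (num_edges n E) / real n\<bar>)"
    using spec_graph[OF G] by blast
  note S1 = graph_sums(1)[OF G U1 QS] and S2 = graph_sums(2)[OF G U1 QS]
  have psd: "\<mu> i \<ge> 0" if "i < n" for i using graph_psd[OF G U1 EV that] .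
  from graph_max[OF G U1 U2 QS] n2 obtain i0 where i0: "i0 < n" and i0max: "\<forall>i<n. \<mu> i \<le> \<mu> i0"
    and i0ge: "\<mu> i0 \<ge> 4 * real (num_edges n E) / real n"
    and eqcase: "\<mu> i0 = 4 * real (num_edges n E) / real n \<Longrightarrow> \<forall>j<n. real (degree n E j) = 2 * real (num_edges n E) / real n"
    by auto
  have np: "real n \<ge> 2" using n2 by simp
  have mpos: "m \<ge> 1" unfolding m_def using m1 by simp
  define d where "d = 2 * m / real n"
  have dpos: "d > 0" unfolding d_def using mpos np by simp
  define y where "y i = \<mu> i - d" for i
  have QEy: "QE n E = (\<Sum>i<n. \<bar>y i\<bar>)" unfolding QEe y_def d_def m_def ..
  have Sy: "(\<Sum>i<n. y i) = 0"
  proof -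
    have "(\<Sum>i<n. y i) = (\<Sum>i<n. \<mu> i) - real n * d" unfolding y_def by (simp add: sum_subtractf)
    thus ?thesis unfolding S1 d_def m_def using np by simp
  qed
  have Sy2: "(\<Sum>i<n. (y i)^2) = X"
  proof -
    have "(\<Sum>i<n. (y i)^2) = (\<Sum>i<n. (\<mu> i)^2 - 2 * d * \<mu> i + d^2)"
      unfolding y_def by (intro sum.cong) (auto simp: power2_eq_square algebra_simps)
    also have "\<dots> = (\<Sum>i<n. (\<mu> i)^2) - 2 * d * (\<Sum>i<n. \<mu> i) + real n * d^2"
      by (simp add: sum.distrib sum_subtractf sum_distrib_left)
    also have "\<dots> = X" unfolding S1 S2 X_def d_def m_def using np
      by (simp add: power2_eq_square field_simps)
    finally show ?thesis .
  qed
  have X0: "X \<ge> 0" unfolding Sy2[symmetric] by (intro sum_nonneg) auto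
  define R where "R = {..<n} - {i0}"
  have Rfin: "finite R" unfolding R_def by simp
  have cR: "real (card R) = real n - 1" unfolding R_def using i0 by (simp add: of_nat_diff)
  have splitR: "(\<Sum>i<n. g i) = g i0 + (\<Sum>i\<in>R. g i)" for g :: "nat \<Rightarrow> real"
    unfolding R_def using i0 by (simp add: sum.remove)
  have y0: "y i0 \<ge> d" using i0ge unfolding y_def d_def m_def by simp
  have QEs: "QE n E = y i0 + (\<Sum>i\<in>R. \<bar>y i\<bar>)" unfolding QEy splitR using y0 dpos by simp
  have SR2: "(\<Sum>i\<in>R. (y i)^2) = X - (y i0)^2" using Sy2 splitR[of "\<lambda>i. (y i)^2"] by simp
  have SR2nn: "X - (y i0)^2 \<ge> 0" unfolding SR2[symmetric] by (intro sum_nonneg) auto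
  have CS: "(\<Sum>i\<in>R. \<bar>y i\<bar>) \<le> sqrt ((real n - 1) * (X - (y i0)^2))"
    using cs_abs(1)[OF Rfin, of y] unfolding cR SR2 .
  have step1: "QE n E \<le> y i0 + sqrt ((real n - 1) * (X - (y i0)^2))" using QEs CS by simp
  have pos: "2 * m + M1 > 0" using mpos unfolding M1_def by simp
  have nd2: "real n * d^2 = 4 * m^2 / real n" unfolding d_def using np by (simp add: power2_eq_square field_simps)
  have Xe: "X = 2 * m + M1 - 4 * m^2 / real n" unfolding X_def m_def M1_def ..
  have partI: "real n \<le> 8 * m^2 / (2 * m + M1) \<longrightarrow>
            QE n E \<le> 2 * m / real n + sqrt ((real n - 1) * (X - (2 * m / real n)^2)) \<and>
            (QE n E = 2 * m / real n + sqrt ((real n - 1) * (X - (2 * m / real n)^2)) \<longleftrightarrow>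
               graph_iso n E (complete_graph n) \<or>
               (even n \<and> graph_iso n E (matching_graph n)) \<or>
               (\<exists>r. is_S n E r))"
  proof (intro impI conjI)
    assume H: "real n \<le> 8 * m^2 / (2 * m + M1)"
    have "real n * (2 * m + M1) \<le> 8 * m^2" using H pos by (simp add: le_divide_eq)
    hence "2 * m + M1 \<le> 8 * m^2 / real n" using np by (simp add: le_divide_eq mult.commute)
    hence Xle: "X \<le> real n * d^2" unfolding Xe nd2 by (simp add: field_simps)
    have TM: "y i0 + sqrt ((real n - 1) * (X - (y i0)^2)) \<le> d + sqrt ((real n - 1) * (X - d^2))"
      "y i0 + sqrt ((real n - 1) * (X - (y i0)^2)) = d + sqrt ((real n - 1) * (X - d^2)) \<Longrightarrow> y i0 = d"
      using T_mono[of "real n - 1" d "y i0" X] np dpos y0 SR2nn Xle by auto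
    show le: "QE n E \<le> 2 * m / real n + sqrt ((real n - 1) * (X - (2 * m / real n)^2))"
      using step1 TM(1) unfolding d_def by simp
    show "QE n E = 2 * m / real n + sqrt ((real n - 1) * (X - (2 * m / real n)^2)) \<longleftrightarrow>
               graph_iso n E (complete_graph n) \<or>
               (even n \<and> graph_iso n E (matching_graph n)) \<or>
               (\<exists>r. is_S n E r)"
    proof
      assume eq: "QE n E = 2 * m / real n + sqrt ((real n - 1) * (X - (2 * m / real n)^2))"
      hence eq': "QE n E = d + sqrt ((real n - 1) * (X - d^2))" unfolding d_def .
      have e1: "y i0 + sqrt ((real n - 1) * (X - (y i0)^2)) = d + sqrt ((real n - 1) * (X - d^2))"
        using step1 TM(1) eq' by linarith
      hence yd: "y i0 = d" by (rule TM(2))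
      have "(\<Sum>i\<in>R. \<bar>y i\<bar>) = sqrt ((real n - 1) * (X - (y i0)^2))" using QEs eq' e1 by linarith
      hence eqR: "(\<Sum>i\<in>R. \<bar>y i\<bar>) = sqrt (real (card R) * (\<Sum>i\<in>R. (y i)^2))" unfolding cR SR2 .
      have absR: "\<bar>y i\<bar> = \<bar>y j\<bar>" if "i \<in> R" "j \<in> R" for i j using cs_abs(2)[OF Rfin eqR that] .
      have mu0: "\<mu> i0 = 4 * real (num_edges n E) / real n" using yd unfolding y_def d_def m_def by simp
      have degd: "\<forall>j<n. real (degree n E j) = d" using eqcase[OF mu0] unfolding d_def m_def .
      define r where "r = degree n E 0"
      have rd: "real r = d" unfolding r_def using degd n2 by simp
      have reg: "\<forall>j<n. degree n E j = r" using degd rd by (metis of_nat_eq_iff)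
      define j1 where "j1 = (if i0 = 0 then 1 else (0::nat))"
      have j1R: "j1 \<in> R" unfolding j1_def R_def using n2 by auto
      have oth: "\<forall>i<n. i \<noteq> i0 \<longrightarrow> \<bar>\<mu> i - real r\<bar> = \<bar>y j1\<bar>"
      proof (intro allI impI)
        fix i assume "i < n" "i \<noteq> i0"
        hence "i \<in> R" unfolding R_def by simp
        from absR[OF this j1R] show "\<bar>\<mu> i - real r\<bar> = \<bar>y j1\<bar>" unfolding y_def rd .
      qed
      have mi0: "\<mu> i0 = 2 * real r" using yd rd unfolding y_def by simp
      have "is_S n E r" by (rule regular_to_S[OF G U1 U2 QS n2 reg i0 mi0 oth])
      thus "graph_iso n E (complete_graph n) \<or> (even n \<and> graph_iso n E (matching_graph n)) \<or> (\<exists>r. is_S n E r)"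
        by blast
    next
      assume "graph_iso n E (complete_graph n) \<or> (even n \<and> graph_iso n E (matching_graph n)) \<or> (\<exists>r. is_S n E r)"
      then obtain r where Sr: "is_S n E r"
        using iso_S complete_S[OF n2] matching_S by blast
      show "QE n E = 2 * m / real n + sqrt ((real n - 1) * (X - (2 * m / real n)^2))"
        using is_S_eq[OF G n2 U1 EV QEe S1 S2 Sr] unfolding m_def X_def .
    qed
  qed
  have partII: "real n > 8 * m^2 / (2 * m + M1) \<longrightarrow>
            QE n E < sqrt (X / real n) + sqrt ((real n - 1) * (X - X / real n))"
  proof
    assume H: "real n > 8 * m^2 / (2 * m + M1)"
    have "real n * (2 * m + M1) > 8 * m^2" using H pos by (simp add: divide_less_eq)
    hence "2 * m + M1 > 8 * m^2 / real n" using np by (simp add: divide_less_eq mult.commute)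
    hence Xgt: "X > real n * d^2" unfolding Xe nd2 by (simp add: field_simps)
    have rhs: "sqrt (X / real n) + sqrt ((real n - 1) * (X - X / real n)) = real n * sqrt (X / real n)"
    proof -
      have "(real n - 1) * (X - X / real n) = (real n - 1)^2 * (X / real n)"
        using np by (simp add: power2_eq_square field_simps)
      moreover have "sqrt ((real n - 1)^2 * (X / real n)) = sqrt ((real n - 1)^2) * sqrt (X / real n)"
        by (rule real_sqrt_mult)
      moreover have "sqrt ((real n - 1)^2) = real n - 1" using np by simp
      ultimately have "sqrt ((real n - 1) * (X - X / real n)) = (real n - 1) * sqrt (X / real n)"
        by simp
      thus ?thesis by (simp add: algebra_simps)
    qed
    have sq: "sqrt (real n * X) = real n * sqrt (X / real n)"
    proof -
      have "real n * X = (real n)^2 * (X / real n)" using np by (simp add: power2_eq_square)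
      moreover have "sqrt ((real n)^2 * (X / real n)) = sqrt ((real n)^2) * sqrt (X / real n)"
        by (rule real_sqrt_mult)
      ultimately show ?thesis by simp
    qed
    have cn: "real (card {..<n}) = real n" by simp
    have CSall: "QE n E \<le> sqrt (real n * X)"
      using cs_abs(1)[of "{..<n}" y] unfolding QEy cn Sy2 by simp
    have neq: "QE n E \<noteq> sqrt (real n * X)"
    proof
      assume eqa: "QE n E = sqrt (real n * X)"
      hence "(\<Sum>i<n. \<bar>y i\<bar>) = sqrt (real (card {..<n}) * (\<Sum>i<n. (y i)^2))" unfolding QEy cn Sy2 .
      hence alleq: "\<bar>y i\<bar> = \<bar>y i0\<bar>" if "i < n" for i using cs_abs(2)[of "{..<n}" y i i0] that i0 by simp
      define t where "t = y i0"
      have t0: "t \<ge> d" unfolding t_def using y0 .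
      have "X = real n * t^2"
      proof -
        have "X = (\<Sum>i<n. \<bar>y i\<bar>^2)" unfolding Sy2[symmetric] by simp
        also have "\<dots> = (\<Sum>i<n. t^2)"
        proof (rule sum.cong[OF refl])
          fix i assume "i \<in> {..<n}"
          hence "\<bar>y i\<bar> = \<bar>t\<bar>" using alleq unfolding t_def by simp
          thus "\<bar>y i\<bar>^2 = t^2" by (metis power2_abs)
        qed
        finally show ?thesis by simp
      qed
      hence "t^2 > d^2" using Xgt np by simp
      hence td: "t > d" using t0 dpos by (smt (verit) power_mono)
      have yt: "y i = t" if "i < n" for i
      proof (rule ccontr)
        assume "y i \<noteq> t"
        hence "y i = - t" using alleq[OF that] t0 dpos unfolding t_def by (auto simp: abs_if split: if_splits)
        hence "\<mu> i < 0" using td unfolding y_def by simp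
        thus False using psd[OF that] by simp
      qed
      have "(\<Sum>i<n. y i) = real n * t" using yt by simp
      thus False using Sy td dpos np by simp
    qed
    show "QE n E < sqrt (X / real n) + sqrt ((real n - 1) * (X - X / real n))"
      using CSall neq unfolding rhs sq[symmetric] by simp
  qed
  show ?thesis using partI partII by blast
qed


end
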